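(* Let $n\ge2$ and $1\le p<n$. Let $\varphi$ satisfy conditions (1)–(5) and assume $\lim_{t\to0^+}t/\varphi(t)=\infty$. Let $G\subset\mathbb R^n$ be the mushroom domain described below. Then there do not exist $q\in[1,\infty)$ and $C\in\mathbb R$ such that $$\inf_{b\in\mathbb R}\|u-b\|_{L^q(G)}\le C\|\nabla u\|_{L^p(G)}$$ holds for all $u\in L^1_p(G)$.
   Context: Conditions on $\varphi:[0,\infty)\to[0,\infty)$: (1) continuous; (2) strictly increasing; (3) $\varphi(0)=\lim_{t\to0^+}\varphi(t)=0$; (4) there is $C_\varphi\ge1$ with $\varphi(t_1)/t_1\le C_\varphi\varphi(t_2)/t_2$ whenever $0<t_1\le t_2$; (5) there is $C^{\Delta_2}_\varphi\ge1$ with $\varphi(2t)\le C^{\Delta_2}_\varphi\varphi(t)$ for all $t>0$. Mushroom domain: Let $(r_m)_{m\ge1}$ be a decreasing sequence of positive numbers converging to $0$ with $\varphi(r_m)\le r_m$ for all $m$. Let $Q=\{x\in\mathbb R^n: x_i>0\text{ for all }i\}$. For each $m$, let $Q_m$ be a closed cube of side length $2r_m$ and $P_m$ a closed rectangular box with one side of length $r_m$ and the remaining $n-1$ sides of length $2\varphi(r_m)$. Each $P_m$ is placed outside $Q$ with one of its faces of size $(2\varphi(r_m))^{n-1}$ lying in the face $\{x_1=0,\ x_2,\dots,x_n>0\}$ of $Q$ (its side of length $r_m$ perpendicular to that face), and the cube $Q_m$ is attached to the opposite face of $P_m$, forming a "mushroom" $Q_m\cup P_m$; the mushrooms are pairwise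 disjoint and each has distance at least $1$ and at most $4$ from the origin. Let $Q_m^*,P_m^*$ be images of $Q_m,P_m$ under an isometry moving them onto the face $\{x_2=0,\ x_1,x_3,\dots,x_n>0\}$ of $Q$ in the same way (pairwise disjoint, at distance between $1$ and $4$ from the origin). Set $G=\operatorname{int}\big(Q\cup\bigcup_{m=1}^\infty(Q_m\cup P_m\cup Q_m^*\cup P_m^* )\big)$. $L^1_p(G)=\{u\in L^1_{loc}(G):|\nabla u|\in L^p(G)\}$. *)

theory Defs
  imports "HOL-Analysis.Analysis"
begin

definition admissible_phi :: "(real \<Rightarrow> real) \<Rightarrow> bool" where
  "admissible_phi \<phi> \<longleftrightarrow>
     (\<forall>t\<ge>0. \<phi> t \<ge> 0) \<and>
     continuous_on {0..} \<phi> \<and>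
     strict_mono_on {0..} \<phi> \<and>
     \<phi> 0 = 0 \<and> (\<phi> \<longlongrightarrow> 0) (at_right 0) \<and>
     (\<exists>C\<ge>1. \<forall>t1 t2. 0 < t1 \<and> t1 \<le> t2 \<longrightarrow> \<phi> t1 / t1 \<le> C * (\<phi> t2 / t2)) \<and>
     (\<exists>C\<ge>1. \<forall>t>0. \<phi> (2 * t) \<le> C * \<phi> t)"

fun cont_diff :: "nat \<Rightarrow> (real^'n \<Rightarrow> real) \<Rightarrow> bool" where
  "cont_diff 0 f = continuous_on UNIV f"
| "cont_diff (Suc k) f =
     ((\<forall>x. f differentiable (at x)) \<and> continuous_on UNIV f \<and>
      (\<forall>i. cont_diff k (\<lambda>x. frechet_derivative f (at x) (axis i 1))))"

definition partial_deriv :: "'n \<Rightarrow> (real^'n \<Rightarrow> real) \<Rightarrow> real^'n \<Rightarrow> real" where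
  "partial_deriv i f x = frechet_derivative f (at x) (axis i 1)"

definition test_function :: "(real^'n) set \<Rightarrow> (real^'n \<Rightarrow> real) \<Rightarrow> bool" where
  "test_function G \<psi> \<longleftrightarrow> (\<forall>k. cont_diff k \<psi>) \<and>
     compact (closure {x. \<psi> x \<noteq> 0}) \<and> closure {x. \<psi> x \<noteq> 0} \<subseteq> G"

definition loc_integrable :: "(real^'n) set \<Rightarrow> (real^'n \<Rightarrow> real) \<Rightarrow> bool" where
  "loc_integrable G u \<longleftrightarrow> u \<in> borel_measurable (lebesgue_on G) \<and>
     (\<forall>K. compact K \<and> K \<subseteq> G \<longrightarrow> integrable (lebesgue_on K) u)"

definition weak_gradient :: "(real^'n) set \<Rightarrow> (real^'n \<Rightarrow> real) \<Rightarrow> (real^'n \<Rightarrow> real^'n) \<Rightarrow> bool" where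
  "weak_gradient G u g \<longleftrightarrow>
     (\<forall>i. loc_integrable G (\<lambda>x. g x $ i)) \<and>
     (\<forall>\<psi> i. test_function G \<psi> \<longrightarrow>
        (\<integral>x. u x * partial_deriv i \<psi> x \<partial>lebesgue_on G) = - (\<integral>x. g x $ i * \<psi> x \<partial>lebesgue_on G))"

definition Lnorm :: "(real^'n) set \<Rightarrow> real \<Rightarrow> (real^'n \<Rightarrow> real) \<Rightarrow> ennreal" where
  "Lnorm G s f = (let I = (\<integral>\<^sup>+x. ennreal (\<bar>f x\<bar> powr s) \<partial>lebesgue_on G) in
      if I = \<infinity> then \<infinity> else ennreal (enn2real I powr (1 / s)))"

definition in_L1p :: "(real^'n) set \<Rightarrow> real \<Rightarrow> (real^'n \<Rightarrow> real) \<Rightarrow> (real^'n \<Rightarrow> real^'n) \<Rightarrow> bool" where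
  "in_L1p G p u g \<longleftrightarrow> loc_integrable G u \<and> weak_gradient G u g \<and>
     Lnorm G p (\<lambda>x. norm (g x)) < \<infinity>"

definition open_orthant :: "(real^'n) set" where
  "open_orthant = {x. \<forall>i. 0 < x $ i}"

text \<open>Stem P: side r perpendicular to face {x_a = 0}, other sides 2 phi(r), lower corner c.\<close>
definition stem :: "'n \<Rightarrow> real \<Rightarrow> real \<Rightarrow> real^'n \<Rightarrow> (real^'n) set" where
  "stem a r w c = {x. - r \<le> x $ a \<and> x $ a \<le> 0 \<and>
       (\<forall>j. j \<noteq> a \<longrightarrow> c $ j \<le> x $ j \<and> x $ j \<le> c $ j + 2 * w)}"

text \<open>Cap Q: closed cube of side 2r attached to the face {x_a = -r} of the stem.\<close>
definition cap :: "'n \<Rightarrow> real \<Rightarrow> real^'n \<Rightarrow> (real^'n) set" where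
  "cap a r d = {x. - 3 * r \<le> x $ a \<and> x $ a \<le> - r \<and>
       (\<forall>j. j \<noteq> a \<longrightarrow> d $ j \<le> x $ j \<and> x $ j \<le> d $ j + 2 * r)}"

text \<open>Admissible placement: the inner face of the stem lies in the open face
  {x_a = 0, x_j > 0 (j \<noteq> a)} of the orthant, and the outer face of the stem lies
  in a face of the cube.\<close>
definition placement_ok :: "'n \<Rightarrow> real \<Rightarrow> real \<Rightarrow> real^'n \<Rightarrow> real^'n \<Rightarrow> bool" where
  "placement_ok a r w c d \<longleftrightarrow>
     (\<forall>j. j \<noteq> a \<longrightarrow> 0 < c $ j \<and> d $ j \<le> c $ j \<and> c $ j + 2 * w \<le> d $ j + 2 * r)"

definition mushroom :: "'n \<Rightarrow> real \<Rightarrow> real \<Rightarrow> real^'n \<Rightarrow> real^'n \<Rightarrow> (real^'n) set" where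
  "mushroom a r w c d = cap a r d \<union> stem a r w c"

end

theory Submission
  imports Defs "HOL-Analysis.Analysis"
begin


lemma deriv_integral_zero:
  fixes f F :: "'a::euclidean_space \<Rightarrow> real" and e :: 'a
  assumes deriv: "\<And>x. ((\<lambda>t. f (x + t *\<^sub>R e)) has_real_derivative F x) (at 0)"
    and Fb: "\<And>x. \<bar>F x\<bar> \<le> B"
    and fc: "continuous_on UNIV f"
    and Fm: "F \<in> borel_measurable borel"
    and fz: "\<And>x. norm x > \<rho> \<Longrightarrow> f x = 0"
    and Fz: "\<And>x. norm x > \<rho> \<Longrightarrow> F x = 0"
  shows "integral\<^sup>L lborel F = 0"
proof -
  define h :: "nat \<Rightarrow> real" where "h k = 1 / real (Suc k)" for k
  have hpos: "0 < h k" "h k \<le> 1" for k by (auto simp: h_def field_simps)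
  define D where "D k x = (f (x + h k *\<^sub>R e) - f x) / h k" for k x
  have fm: "f \<in> borel_measurable borel" using fc by (rule borel_measurable_continuous_onI)
  have fint: "integrable lborel f"
  proof -
    have "integrable lborel (\<lambda>x. indicator (cball 0 \<rho>) x *\<^sub>R f x)"
      by (rule borel_integrable_compact) (auto intro: continuous_on_subset[OF fc])
    also have "(\<lambda>x. indicator (cball 0 \<rho>) x *\<^sub>R f x) = f"
      using fz by (auto simp: indicator_def fun_eq_iff not_le)
    finally show ?thesis .
  qed
  have shift: "integrable lborel (\<lambda>x. f (c + x)) \<and> integral\<^sup>L lborel (\<lambda>x. f (c + x)) = integral\<^sup>L lborel f" for c :: 'a
  proof -
    have "integrable (distr lborel borel ((+) c)) f" using fint by (simp add: lborel_distr_plus)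
    then have "integrable lborel (\<lambda>x. f (c + x))"
      by (subst integrable_distr_eq[symmetric]) (auto intro: fm)
    moreover have "integral\<^sup>L lborel (\<lambda>x. f (c + x)) = integral\<^sup>L (distr lborel borel ((+) c)) f"
      by (subst integral_distr) (auto intro: fm)
    ultimately show ?thesis by (simp add: lborel_distr_plus)
  qed
  have Dint0: "integral\<^sup>L lborel (D k) = 0" for k
  proof -
    have i1: "integrable lborel (\<lambda>x. f (x + h k *\<^sub>R e))"
      using shift[of "h k *\<^sub>R e"] by (simp add: add.commute)
    have "integral\<^sup>L lborel (D k) = (integral\<^sup>L lborel (\<lambda>x. f (x + h k *\<^sub>R e)) - integral\<^sup>L lborel f) / h k"
      unfolding D_def using i1 fint by (simp add: integral_diff)
    also have "integral\<^sup>L lborel (\<lambda>x. f (x + h k *\<^sub>R e)) = integral\<^sup>L lborel f"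
      using shift[of "h k *\<^sub>R e"] by (simp add: add.commute)
    finally show ?thesis by simp
  qed
  have line: "((\<lambda>s. f (x + s *\<^sub>R e)) has_real_derivative F (x + t *\<^sub>R e)) (at t)" for x t
  proof -
    have "((\<lambda>s. f ((x + t *\<^sub>R e) + s *\<^sub>R e)) has_real_derivative F (x + t *\<^sub>R e)) (at (t + - t))"
      using deriv[of "x + t *\<^sub>R e"] by simp
    then have "((\<lambda>s. f ((x + t *\<^sub>R e) + (s + - t) *\<^sub>R e)) has_real_derivative F (x + t *\<^sub>R e)) (at t)"
      by (subst (asm) DERIV_shift) 
    then show ?thesis by (simp add: algebra_simps)
  qed
  have Dbound: "\<bar>D k x\<bar> \<le> B" for k x
  proof -
    obtain z where "0 < z" "z < h k" and eq: "f (x + h k *\<^sub>R e) - f (x + 0 *\<^sub>R e) = (h k - 0) * F (x + z *\<^sub>R e)"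
      using MVT2[of 0 "h k" "\<lambda>s. f (x + s *\<^sub>R e)" "\<lambda>s. F (x + s *\<^sub>R e)"] hpos[of k] line by auto
    then have "D k x = F (x + z *\<^sub>R e)" using hpos[of k] by (simp add: D_def)
    then show ?thesis using Fb by simp
  qed
  have Dzero: "D k x = 0" if "norm x > \<rho> + norm e" for k x
  proof -
    have "norm (h k *\<^sub>R e) \<le> norm e" using hpos[of k] by (simp add: mult_left_le_one_le)
    then have "norm (x + h k *\<^sub>R e) > \<rho>" using that norm_triangle_ineq2[of x "- (h k *\<^sub>R e)"] by simp
    moreover have "norm x > \<rho>" using that by (smt (verit) norm_ge_zero)
    ultimately show ?thesis by (simp add: D_def fz)
  qed
  define w where "w x = indicator (cball 0 (\<rho> + norm e)) x *\<^sub>R B" for x :: 'a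
  have wint: "integrable lborel w" unfolding w_def
    by (rule borel_integrable_compact) (auto intro: continuous_intros)
  have Dm: "D k \<in> borel_measurable borel" for k unfolding D_def using fm by measurable
  have lim: "(\<lambda>k. D k x) \<longlonglongrightarrow> F x" for x
  proof -
    have d: "((\<lambda>t. (f (x + t *\<^sub>R e) - f (x + 0 *\<^sub>R e)) / (t - 0)) \<longlongrightarrow> F x) (at 0)"
      using deriv[of x] unfolding has_field_derivative_iff by simp
    have hl: "filterlim h (at 0) sequentially"
    proof -
      have "(\<lambda>k. 1 / real (Suc k)) \<longlonglongrightarrow> 0"
        using LIMSEQ_Suc[OF lim_const_over_n[of 1]] by simp
      then show ?thesis unfolding filterlim_at h_def using hpos by (auto simp: h_def)
    qed
    from filterlim_compose[OF d hl] show ?thesis by (simp add: D_def o_def)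
  qed
  have "(\<lambda>k. integral\<^sup>L lborel (D k)) \<longlonglongrightarrow> integral\<^sup>L lborel F"
  proof (rule integral_dominated_convergence[where w=w])
    show "AE x in lborel. norm (D k x) \<le> w x" for k
      using Dbound Dzero by (auto simp: w_def indicator_def not_le)
  qed (use Fm Dm wint lim in auto)
  then show ?thesis using Dint0 by (simp add: LIMSEQ_const_iff)
qed

lemma int_bdd_compact:
  fixes f :: "'a::euclidean_space \<Rightarrow> real"
  assumes "f \<in> borel_measurable borel" "compact K" "\<And>x. x \<in> K \<Longrightarrow> \<bar>f x\<bar> \<le> B"
    "\<And>x. x \<notin> K \<Longrightarrow> f x = 0"
  shows "integrable lborel f"
proof -
  have "integrable lborel (\<lambda>x. indicator K x *\<^sub>R B)"
    by (rule borel_integrable_compact) (auto simp: assms intro: continuous_intros)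
  moreover have "AE x in lborel. norm (f x) \<le> norm (indicator K x *\<^sub>R B)"
    using assms(3,4) by (intro AE_I2) (auto simp: indicator_def intro: order_trans[OF _ abs_ge_self])
  moreover have "f \<in> borel_measurable lborel" using assms(1) by simp
  ultimately show ?thesis by (metis Bochner_Integration.integrable_bound)
qed

lemma frechet_zero_outside:
  fixes \<psi> :: "'a::real_normed_vector \<Rightarrow> real"
  assumes "closed K" "x \<notin> K" "\<And>y. y \<notin> K \<Longrightarrow> \<psi> y = 0"
  shows "(\<psi> has_derivative (\<lambda>v. 0)) (at x)" "frechet_derivative \<psi> (at x) = (\<lambda>v. 0)"
proof -
  show d: "(\<psi> has_derivative (\<lambda>v. 0)) (at x)"
    by (rule has_derivative_transform_within_open[of "\<lambda>y. 0" _ _ _ "- K"])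
       (use assms in \<open>auto simp: open_Compl\<close>)
  then show "frechet_derivative \<psi> (at x) = (\<lambda>v. 0)"
    by (metis frechet_derivative_at)
qed

lemma integrable_on_from_lborel:
  fixes f :: "'a::euclidean_space \<Rightarrow> real"
  assumes "integrable lborel (\<lambda>x. indicator K x *\<^sub>R f x)" "K \<in> sets lebesgue"
  shows "integrable (lebesgue_on K) f"
proof -
  have "(\<lambda>x. indicator K x *\<^sub>R f x) \<in> borel_measurable lborel"
    using assms(1) by (rule borel_measurable_integrable)
  then have "integrable lebesgue (\<lambda>x. indicator K x *\<^sub>R f x)"
    using assms(1) integrable_completion by blast
  then show ?thesis using assms(2) by (subst integrable_restrict_space) auto
qed

lemma integral_on_to_lborel:
  fixes f h :: "'a::euclidean_space \<Rightarrow> real"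
  assumes "h \<in> borel_measurable borel" "G \<in> sets lebesgue"
    "\<And>x. indicator G x *\<^sub>R f x = h x"
  shows "integral\<^sup>L (lebesgue_on G) f = integral\<^sup>L lborel h"
proof -
  have "integral\<^sup>L (lebesgue_on G) f = integral\<^sup>L lebesgue (\<lambda>x. indicator G x *\<^sub>R f x)"
    using assms(2) by (subst integral_restrict_space) auto
  also have "\<dots> = integral\<^sup>L lebesgue h" using assms(3) by simp
  also have "\<dots> = integral\<^sup>L lborel h" using assms(1) by (subst integral_completion) auto
  finally show ?thesis .
qed

lemma weak_grad_C1:
  fixes u :: "real^'n \<Rightarrow> real" and g :: "real^'n \<Rightarrow> real^'n"
  assumes V: "open V" "G \<subseteq> V" "open G"
    and du: "\<And>x. x \<in> V \<Longrightarrow> (u has_derivative (\<lambda>v. g x \<bullet> v)) (at x)"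
    and gb: "\<And>x. norm (g x) \<le> B"
    and gm: "g \<in> borel_measurable borel"
  shows "weak_gradient G u g \<and> loc_integrable G u"
proof -
  have ucont: "continuous_on V u"
    using du V(1) by (metis continuous_on_eq_continuous_at has_derivative_continuous)
  define uV where "uV x = (if x \<in> V then u x else 0)" for x
  have uVm: "uV \<in> borel_measurable borel"
    unfolding uV_def using V(1) ucont by (intro borel_measurable_continuous_on_if) (auto simp: borel_open)
  have gim: "(\<lambda>x. g x $ i) \<in> borel_measurable borel" for i
  proof -
    have "(\<lambda>x. g x \<bullet> axis i 1) \<in> borel_measurable borel" using gm by measurable
    then show ?thesis by (simp add: inner_axis)
  qed
  have Gleb: "G \<in> sets lebesgue" using V(3) by (simp add: borel_open)
  have cptleb: "K \<in> sets lebesgue" if "compact K" for K :: "(real^'n) set"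
    using that by (simp add: borel_compact)
  have locu: "loc_integrable G u"
    unfolding loc_integrable_def
  proof (intro conjI allI impI)
    show "u \<in> borel_measurable (lebesgue_on G)"
      using continuous_imp_measurable_on_sets_lebesgue[OF continuous_on_subset[OF ucont V(2)] Gleb] .
    fix K :: "(real^'n) set" assume K: "compact K \<and> K \<subseteq> G"
    show "integrable (lebesgue_on K) u"
      by (rule integrable_on_from_lborel[OF borel_integrable_compact])
         (use K V(2) cptleb in \<open>auto intro: continuous_on_subset[OF ucont]\<close>)
  qed
  have locg: "loc_integrable G (\<lambda>x. g x $ i)" for i
    unfolding loc_integrable_def
  proof (intro conjI allI impI)
    have "(\<lambda>x. g x $ i) \<in> borel_measurable lebesgue"
      using gim[of i] by (intro measurable_completion) simp
    then show "(\<lambda>x. g x $ i) \<in> borel_measurable (lebesgue_on G)"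
      by (rule measurable_restrict_space1)
    fix K :: "(real^'n) set" assume K: "compact K \<and> K \<subseteq> G"
    have "integrable lborel (\<lambda>x. indicator K x *\<^sub>R g x $ i)"
    proof (rule int_bdd_compact[of _ K B])
      show "(\<lambda>x. indicator K x *\<^sub>R g x $ i) \<in> borel_measurable borel"
        using gim[of i] K by (intro borel_measurable_scaleR) (auto intro!: borel_measurable_indicator borel_compact)
      show "\<bar>indicator K x *\<^sub>R g x $ i\<bar> \<le> B" if "x \<in> K" for x
        using that gb[of x] component_le_norm_cart[of "g x" i] by simp
    qed (use K in auto)
    then show "integrable (lebesgue_on K) (\<lambda>x. g x $ i)"
      using K cptleb by (intro integrable_on_from_lborel) auto
  qed
  have ident: "(\<integral>x. u x * partial_deriv i \<psi> x \<partial>lebesgue_on G) = - (\<integral>x. g x $ i * \<psi> x \<partial>lebesgue_on G)"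
    if tf: "test_function G \<psi>" for \<psi> i
  proof -
    have cd: "cont_diff (Suc 0) \<psi>" using tf unfolding test_function_def by blast
    then have psid: "\<And>x. \<psi> differentiable (at x)" and psic: "continuous_on UNIV \<psi>"
      and dpsic: "continuous_on UNIV (\<lambda>x. frechet_derivative \<psi> (at x) (axis i 1))"
      by auto
    define K where "K = closure {x. \<psi> x \<noteq> 0}"
    have K2: "compact K \<and> K \<subseteq> G" using tf unfolding test_function_def K_def by (rule conjunct2)
    then have K: "compact K" "K \<subseteq> G" by simp_all
    have Kcl: "closed K" using K(1) by (rule compact_imp_closed)
    have psi0: "\<psi> x = 0" if "x \<notin> K" for x
    proof (rule ccontr)
      assume "\<psi> x \<noteq> 0"
      then have "x \<in> {x. \<psi> x \<noteq> 0}" by simp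
      then have "x \<in> K" unfolding K_def using closure_subset by (rule subsetD[rotated])
      then show False using that by simp
    qed
    define dp where "dp x = frechet_derivative \<psi> (at x) (axis i 1)" for x
    have dp0: "dp x = 0" if "x \<notin> K" for x
      using frechet_zero_outside(2)[OF Kcl that psi0] unfolding dp_def by simp
    have dpi: "partial_deriv i \<psi> = dp" unfolding partial_deriv_def dp_def by auto
    define Fm where "Fm x = uV x * dp x + g x $ i * \<psi> x" for x
    define L where "L x v = u x * frechet_derivative \<psi> (at x) v + (g x \<bullet> v) * \<psi> x" for x v
    have fd: "((\<lambda>x. u x * \<psi> x) has_derivative L x) (at x)" for x
    proof (cases "x \<in> V")
      case True
      have "(\<psi> has_derivative frechet_derivative \<psi> (at x)) (at x)"
        using psid frechet_derivative_works by blast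
      from has_derivative_mult[OF du[OF True] this] show ?thesis unfolding L_def by simp
    next
      case False
      then have xK: "x \<notin> K" using K V by blast
      have L0: "L x = (\<lambda>v. 0)"
        using frechet_zero_outside(2)[OF Kcl xK psi0] psi0[OF xK] by (auto simp: L_def)
      have "((\<lambda>x. u x * \<psi> x) has_derivative (\<lambda>v. 0)) (at x)"
        by (rule has_derivative_transform_within_open[of "\<lambda>y. 0" _ _ _ "- K"])
           (use xK Kcl psi0 in \<open>auto simp: open_Compl\<close>)
      then show ?thesis using L0 by simp
    qed
    have LF: "L x (axis i 1) = Fm x" for x
    proof (cases "x \<in> V")
      case True then show ?thesis by (simp add: L_def Fm_def uV_def dp_def inner_axis)
    next
      case False
      then have xK: "x \<notin> K" using K V by blast
      then show ?thesis
        using frechet_zero_outside(2)[OF Kcl xK psi0] psi0[OF xK] dp0[OF xK]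
        by (simp add: L_def Fm_def)
    qed
    have line: "((\<lambda>t. u (x + t *\<^sub>R axis i 1) * \<psi> (x + t *\<^sub>R axis i 1)) has_real_derivative Fm x) (at 0)" for x
    proof -
      have lin: "linear (L x)" using fd[of x] has_derivative_linear by blast
      have a: "((\<lambda>t::real. x + t *\<^sub>R axis i 1) has_derivative (\<lambda>t. t *\<^sub>R axis i 1)) (at 0)"
        by (auto intro!: derivative_eq_intros)
      have b: "((\<lambda>x. u x * \<psi> x) has_derivative L x) (at (x + 0 *\<^sub>R axis i 1))" using fd[of x] by simp
      have "((\<lambda>t. u (x + t *\<^sub>R axis i 1) * \<psi> (x + t *\<^sub>R axis i 1)) has_derivative (\<lambda>t. L x (t *\<^sub>R axis i 1))) (at 0)"
        using diff_chain_at[OF a b] by (simp add: o_def)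
      moreover have "(\<lambda>t. L x (t *\<^sub>R axis i 1)) = (*) (Fm x)"
        using lin LF[of x] by (auto simp: linear_scale fun_eq_iff)
      ultimately show ?thesis unfolding has_field_derivative_def by simp
    qed
    obtain \<rho> where rho: "\<forall>x\<in>K. norm x \<le> \<rho>"
      using compact_imp_bounded[OF K(1)] unfolding bounded_iff by (elim exE) (rule that)
    have outK: "x \<notin> K" if "norm x > \<rho>" for x using that rho by force
    have bnd: "\<exists>M\<ge>0. \<forall>x\<in>K. \<bar>h x\<bar> \<le> M" if "continuous_on K h" for h :: "real^'n \<Rightarrow> real"
    proof -
      have "bounded (h ` K)" using compact_continuous_image[OF that K(1)] compact_imp_bounded by blast
      then obtain M where "\<forall>x\<in>K. \<bar>h x\<bar> \<le> M" by (auto simp: bounded_iff)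
      then show ?thesis by (intro exI[of _ "max M 0"]) force
    qed
    have "continuous_on K u" by (rule continuous_on_subset[OF ucont]) (use K(2) V(2) in auto)
    then obtain Mu where Mu0: "Mu \<ge> 0" and Mu: "\<forall>x\<in>K. \<bar>u x\<bar> \<le> Mu"
      using bnd by blast
    obtain Mp where Mp0: "Mp \<ge> 0" and Mp: "\<forall>x\<in>K. \<bar>\<psi> x\<bar> \<le> Mp"
      using bnd[OF continuous_on_subset[OF psic]] by blast
    obtain Md where Md0: "Md \<ge> 0" and Md: "\<forall>x\<in>K. \<bar>dp x\<bar> \<le> Md"
      using bnd[OF continuous_on_subset[OF dpsic]] unfolding dp_def by blast
    have dpm: "dp \<in> borel_measurable borel" unfolding dp_def using dpsic by (rule borel_measurable_continuous_onI)
    have psim: "\<psi> \<in> borel_measurable borel" using psic by (rule borel_measurable_continuous_onI)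
    define A where "A x = uV x * dp x" for x
    define Bf where "Bf x = g x $ i * \<psi> x" for x
    have Am: "A \<in> borel_measurable borel" unfolding A_def using uVm dpm by measurable
    have Bm: "Bf \<in> borel_measurable borel" unfolding Bf_def using gim[of i] psim by measurable
    have Aint: "integrable lborel A"
    proof (rule int_bdd_compact[OF Am K(1), of "Mu * Md"])
      fix x assume x: "x \<in> K"
      then have "x \<in> V" using K V by auto
      then show "\<bar>A x\<bar> \<le> Mu * Md" using Mu Md x
        by (auto simp: A_def uV_def abs_mult intro!: mult_mono)
    qed (auto simp: A_def dp0)
    have Bint: "integrable lborel Bf"
    proof (rule int_bdd_compact[OF Bm K(1), of "B * Mp"])
      fix x assume x: "x \<in> K"
      have "\<bar>g x $ i\<bar> \<le> B" using gb[of x] component_le_norm_cart[of "g x" i] by simp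
      then show "\<bar>Bf x\<bar> \<le> B * Mp" using Mp x
        by (auto simp: Bf_def abs_mult intro!: mult_mono)
    qed (auto simp: Bf_def psi0)
    have Fm_eq: "Fm = (\<lambda>x. A x + Bf x)" by (auto simp: Fm_def A_def Bf_def)
    have "integral\<^sup>L lborel Fm = 0"
    proof (rule deriv_integral_zero[where f="\<lambda>x. u x * \<psi> x" and e="axis i 1" and \<rho>=\<rho>])
      show "((\<lambda>t. u (x + t *\<^sub>R axis i 1) * \<psi> (x + t *\<^sub>R axis i 1)) has_real_derivative Fm x) (at 0)" for x
        by (rule line)
      show "\<bar>Fm x\<bar> \<le> Mu * Md + B * Mp" for x
      proof (cases "x \<in> K")
        case True
        then have "x \<in> V" using K V by auto
        have "\<bar>g x $ i\<bar> \<le> B" using gb[of x] component_le_norm_cart[of "g x" i] by simp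
        then have "\<bar>g x $ i * \<psi> x\<bar> \<le> B * Mp" using Mp True by (auto simp: abs_mult intro!: mult_mono)
        moreover have "\<bar>uV x * dp x\<bar> \<le> Mu * Md" using Mu Md True \<open>x \<in> V\<close>
          by (auto simp: uV_def abs_mult intro!: mult_mono)
        ultimately show ?thesis unfolding Fm_def by linarith
      next
        case False
        have "0 \<le> B" using gb[of x] norm_ge_zero[of "g x"] by linarith
        then show ?thesis using Mu0 Md0 Mp0 using False by (simp add: Fm_def dp0 psi0)
      qed
      show "continuous_on UNIV (\<lambda>x. u x * \<psi> x)"
        using fd by (intro continuous_at_imp_continuous_on ballI has_derivative_continuous) auto
      show "Fm \<in> borel_measurable borel" unfolding Fm_eq using Am Bm by measurable
      show "u x * \<psi> x = 0" if "norm x > \<rho>" for x using psi0[OF outK[OF that]] by simp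
      show "Fm x = 0" if "norm x > \<rho>" for x using psi0[OF outK[OF that]] dp0[OF outK[OF that]] by (simp add: Fm_def)
    qed
    then have sum0: "integral\<^sup>L lborel A + integral\<^sup>L lborel Bf = 0"
      using Aint Bint by (simp add: Fm_eq)
    have eA: "(\<integral>x. u x * partial_deriv i \<psi> x \<partial>lebesgue_on G) = integral\<^sup>L lborel A"
    proof (rule integral_on_to_lborel[OF Am Gleb])
      show "indicator G x *\<^sub>R (u x * partial_deriv i \<psi> x) = A x" for x
        using dp0[of x] K V by (auto simp: dpi A_def uV_def indicator_def)
    qed
    have eB: "(\<integral>x. g x $ i * \<psi> x \<partial>lebesgue_on G) = integral\<^sup>L lborel Bf"
    proof (rule integral_on_to_lborel[OF Bm Gleb])
      show "indicator G x *\<^sub>R (g x $ i * \<psi> x) = Bf x" for x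
        using psi0[of x] K by (auto simp: Bf_def indicator_def)
    qed
    show ?thesis using sum0 eA eB by simp
  qed
  show ?thesis using locu locg ident unfolding weak_gradient_def by blast
qed



lemma deriv_glue:
  fixes f fa fb :: "real \<Rightarrow> real"
  assumes d1: "(fa has_real_derivative D) (at a)" and d2: "(fb has_real_derivative D) (at a)"
    and ep: "\<epsilon> > 0"
    and e1: "\<And>x. a - \<epsilon> < x \<Longrightarrow> x \<le> a \<Longrightarrow> f x = fa x"
    and e2: "\<And>x. a \<le> x \<Longrightarrow> x < a + \<epsilon> \<Longrightarrow> f x = fb x"
  shows "(f has_real_derivative D) (at a)"
proof -
  have q1: "((\<lambda>y. (fa y - fa a) / (y - a)) \<longlongrightarrow> D) (at a)" using d1 by (simp add: has_field_derivative_iff)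
  have q2: "((\<lambda>y. (fb y - fb a) / (y - a)) \<longlongrightarrow> D) (at a)" using d2 by (simp add: has_field_derivative_iff)
  have "((\<lambda>y. (f y - f a) / (y - a)) \<longlongrightarrow> D) (at_left a)"
  proof (rule Lim_transform_eventually)
    show "((\<lambda>y. (fa y - fa a) / (y - a)) \<longlongrightarrow> D) (at_left a)"
      using q1 filterlim_at_split by blast
    show "\<forall>\<^sub>F y in at_left a. (fa y - fa a) / (y - a) = (f y - f a) / (y - a)"
      unfolding eventually_at_filter eventually_nhds_metric
      by (rule exI[of _ \<epsilon>]) (auto simp: ep e1 dist_real_def)
  qed
  moreover have "((\<lambda>y. (f y - f a) / (y - a)) \<longlongrightarrow> D) (at_right a)"
  proof (rule Lim_transform_eventually)
    show "((\<lambda>y. (fb y - fb a) / (y - a)) \<longlongrightarrow> D) (at_right a)"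
      using q2 filterlim_at_split by blast
    show "\<forall>\<^sub>F y in at_right a. (fb y - fb a) / (y - a) = (f y - f a) / (y - a)"
      unfolding eventually_at_filter eventually_nhds_metric
      by (rule exI[of _ \<epsilon>]) (auto simp: ep e2 dist_real_def)
  qed
  ultimately show ?thesis by (simp add: has_field_derivative_iff filterlim_at_split)
qed

definition sstep :: "real \<Rightarrow> real" where
  "sstep s = (if s \<le> 0 then 0 else if s \<ge> 1 then 1 else 3 * s^2 - 2 * s^3)"
definition sstep' :: "real \<Rightarrow> real" where
  "sstep' s = (if s \<le> 0 then 0 else if s \<ge> 1 then 0 else 6 * s - 6 * s^2)"

lemma sstep_deriv: "(sstep has_real_derivative sstep' s) (at s)"
proof -
  have P: "((\<lambda>s. 3 * s^2 - 2 * s^3) has_real_derivative (6 * s - 6 * s^2)) (at s)" for s :: real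
    by (auto intro!: derivative_eq_intros simp: power2_eq_square)
  consider "s < 0" | "s = 0" | "0 < s \<and> s < 1" | "s = 1" | "s > 1" by linarith
  then show ?thesis
  proof cases
    case 1
    show ?thesis
      by (rule has_field_derivative_transform_within_open[of "\<lambda>_. 0" _ _ "{..<0}"])
         (use 1 in \<open>auto simp: sstep_def sstep'_def\<close>)
  next
    case 2
    show ?thesis
      by (rule deriv_glue[where fa="\<lambda>_. 0" and fb="\<lambda>s. 3 * s^2 - 2 * s^3" and \<epsilon>=1])
         (use 2 P[of 0] in \<open>auto simp: sstep_def sstep'_def\<close>)
  next
    case 3
    show ?thesis
      by (rule has_field_derivative_transform_within_open[of "\<lambda>s. 3 * s^2 - 2 * s^3" _ _ "{0<..<1}"])
         (use 3 P[of s] in \<open>auto simp: sstep_def sstep'_def\<close>)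
  next
    case 4
    show ?thesis
      by (rule deriv_glue[where fb="\<lambda>_. 1" and fa="\<lambda>s. 3 * s^2 - 2 * s^3" and \<epsilon>=1])
         (use 4 P[of 1] in \<open>auto simp: sstep_def sstep'_def\<close>)
  next
    case 5
    show ?thesis
      by (rule has_field_derivative_transform_within_open[of "\<lambda>_. 1" _ _ "{1<..}"])
         (use 5 in \<open>auto simp: sstep_def sstep'_def\<close>)
  qed
qed

lemma sstep'_bound: "\<bar>sstep' s\<bar> \<le> 2"
proof -
  have "\<bar>6 * s - 6 * s^2\<bar> \<le> 2" if "0 < s" "s < 1"
  proof -
    have "6 * s - 6 * s^2 = 6 * (s * (1 - s))" by (simp add: power2_eq_square algebra_simps)
    moreover have "s * (1 - s) \<le> 1/4"
    proof -
      have "s * (1 - s) = 1/4 - (s - 1/2)^2" by (simp add: power2_eq_square algebra_simps)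
      then show ?thesis using zero_le_power2[of "s - 1/2"] by linarith
    qed
    moreover have "0 \<le> s * (1 - s)" using that by simp
    ultimately show ?thesis by simp
  qed
  then show ?thesis by (auto simp: sstep'_def)
qed

lemma sstep_range: "0 \<le> sstep s" "sstep s \<le> 1"
proof -
  have "0 \<le> 3 * s^2 - 2 * s^3 \<and> 3 * s^2 - 2 * s^3 \<le> 1" if "0 < s" "s < 1"
  proof -
    have a: "3 * s^2 - 2 * s^3 = s^2 * (3 - 2 * s)" by (simp add: power2_eq_square power3_eq_cube algebra_simps)
    have b: "1 - (3 * s^2 - 2 * s^3) = (1 - s)^2 * (1 + 2 * s)"
      by (simp add: power2_eq_square power3_eq_cube algebra_simps)
    have "0 \<le> s^2 * (3 - 2 * s)" using that by simp
    moreover have "0 \<le> (1 - s)^2 * (1 + 2 * s)" using that by simp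
    ultimately show ?thesis using a b by linarith
  qed
  then show "0 \<le> sstep s" "sstep s \<le> 1" by (auto simp: sstep_def)
qed

lemma sstep'_cont: "continuous_on UNIV sstep'"
proof -
  have eq: "sstep' = (\<lambda>s. 6 * (max 0 (min 1 s)) - 6 * (max 0 (min 1 s))^2)"
    by (auto simp: sstep'_def fun_eq_iff max_def min_def)
  show ?thesis unfolding eq by (intro continuous_intros)
qed



lemma Lnorm_ge:
  assumes "s > 0" "c \<ge> 0" "ennreal c \<le> (\<integral>\<^sup>+x. ennreal (\<bar>f x\<bar> powr s) \<partial>lebesgue_on G)"
  shows "ennreal (c powr (1/s)) \<le> Lnorm G s f"
proof (cases "(\<integral>\<^sup>+x. ennreal (\<bar>f x\<bar> powr s) \<partial>lebesgue_on G) = \<infinity>")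
  case True then show ?thesis by (simp add: Lnorm_def)
next
  case False
  let ?I = "(\<integral>\<^sup>+x. ennreal (\<bar>f x\<bar> powr s) \<partial>lebesgue_on G)"
  have "c \<le> enn2real ?I"
    using enn2real_mono[OF assms(3)] False assms(2) by (simp add: top.not_eq_extremum)
  then have "c powr (1/s) \<le> enn2real ?I powr (1/s)"
    using assms by (intro powr_mono2) auto
  then show ?thesis using False by (simp add: Lnorm_def)
qed

lemma Lnorm_le:
  assumes "s > 0" "c \<ge> 0" "(\<integral>\<^sup>+x. ennreal (\<bar>f x\<bar> powr s) \<partial>lebesgue_on G) \<le> ennreal c"
  shows "Lnorm G s f \<le> ennreal (c powr (1/s))"
proof -
  let ?I = "(\<integral>\<^sup>+x. ennreal (\<bar>f x\<bar> powr s) \<partial>lebesgue_on G)"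
  have ne: "?I \<noteq> \<infinity>"
  proof
    assume "?I = \<infinity>" then have "\<infinity> \<le> ennreal c" using assms(3) by simp
    then show False by (simp add: top_unique)
  qed
  have "enn2real ?I \<le> c" using assms by (intro enn2real_leI) auto
  then have "enn2real ?I powr (1/s) \<le> c powr (1/s)" using assms by (intro powr_mono2) auto
  then show ?thesis using ne by (simp add: Lnorm_def)
qed

lemma Lnorm_top:
  assumes "(\<integral>\<^sup>+x. ennreal (\<bar>f x\<bar> powr s) \<partial>lebesgue_on G) = \<infinity>"
  shows "Lnorm G s f = \<infinity>"
  using assms by (simp add: Lnorm_def)

lemma nn_lower:
  fixes f :: "'a::euclidean_space \<Rightarrow> real"
  assumes "G \<in> sets lebesgue" "S \<subseteq> G" "S \<in> sets lebesgue" "a \<ge> 0"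
    "\<And>x. x \<in> S \<Longrightarrow> a \<le> \<bar>f x\<bar> powr s"
  shows "ennreal a * emeasure lebesgue S \<le> (\<integral>\<^sup>+x. ennreal (\<bar>f x\<bar> powr s) \<partial>lebesgue_on G)"
proof -
  have "ennreal a * emeasure lebesgue S = ennreal a * emeasure (lebesgue_on G) S"
    using assms by (subst emeasure_restrict_space) auto
  also have "\<dots> = (\<integral>\<^sup>+x. ennreal a * indicator S x \<partial>lebesgue_on G)"
    using assms by (subst nn_integral_cmult_indicator) (auto simp: sets_restrict_space_iff)
  also have "\<dots> \<le> (\<integral>\<^sup>+x. ennreal (\<bar>f x\<bar> powr s) \<partial>lebesgue_on G)"
    using assms(5) by (intro nn_integral_mono) (auto simp: indicator_def)
  finally show ?thesis .
qed

lemma nn_upper: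
  fixes f :: "'a::euclidean_space \<Rightarrow> real"
  assumes "G \<in> sets lebesgue" "S \<in> sets lebesgue" "b \<ge> 0"
    "\<And>x. x \<in> G \<Longrightarrow> \<bar>f x\<bar> powr s \<le> b * indicator S x"
  shows "(\<integral>\<^sup>+x. ennreal (\<bar>f x\<bar> powr s) \<partial>lebesgue_on G) \<le> ennreal b * emeasure lebesgue S"
proof -
  have "(\<integral>\<^sup>+x. ennreal (\<bar>f x\<bar> powr s) \<partial>lebesgue_on G) =
        (\<integral>\<^sup>+x. ennreal (\<bar>f x\<bar> powr s) * indicator G x \<partial>lebesgue)"
    using assms by (subst nn_integral_restrict_space) auto
  also have "\<dots> \<le> (\<integral>\<^sup>+x. ennreal b * indicator S x \<partial>lebesgue)"
  proof (intro nn_integral_mono)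
    fix x
    show "ennreal (\<bar>f x\<bar> powr s) * indicator G x \<le> ennreal b * indicator S x"
      using assms(3) assms(4)[of x] by (cases "x \<in> G"; cases "x \<in> S") (auto simp: indicator_def)
  qed
  also have "\<dots> = ennreal b * emeasure lebesgue S"
    using assms by (subst nn_integral_cmult_indicator) auto
  finally show ?thesis .
qed

lemma emeasure_box_cart:
  fixes l u :: "real^'n"
  assumes "\<And>i. l $ i \<le> u $ i"
  shows "emeasure lebesgue (box l u) = ennreal (\<Prod>i\<in>UNIV. u $ i - l $ i)"
    and "emeasure lebesgue (cbox l u) = ennreal (\<Prod>i\<in>UNIV. u $ i - l $ i)"
proof -
  have ne: "cbox l u \<noteq> {}" using assms by (auto simp: interval_ne_empty_cart)
  have c: "emeasure lborel (cbox l u) = ennreal (\<Prod>i\<in>UNIV. u $ i - l $ i)"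
  proof -
    have "emeasure lborel (cbox l u) = ennreal (measure lborel (cbox l u))"
      using emeasure_lborel_cbox_finite[of l u] by (simp add: emeasure_eq_ennreal_measure less_top)
    then show ?thesis using content_cbox_cart[OF ne] by simp
  qed
  have b: "emeasure lborel (box l u) = emeasure lborel (cbox l u)"
    by (simp add: emeasure_lborel_box_eq emeasure_lborel_cbox_eq)
  show "emeasure lebesgue (cbox l u) = ennreal (\<Prod>i\<in>UNIV. u $ i - l $ i)"
    using c by (simp add: emeasure_completion)
  show "emeasure lebesgue (box l u) = ennreal (\<Prod>i\<in>UNIV. u $ i - l $ i)"
    using c b by (simp add: emeasure_completion)
qed



lemma ennreal_all_nat_le_top:
  assumes "\<And>k::nat. ennreal (real k) \<le> E"
  shows "E = \<infinity>"
proof (rule ccontr)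
  assume "E \<noteq> \<infinity>"
  then obtain r where r: "r \<ge> 0" "E = ennreal r" using less_top_ennreal top.not_eq_extremum by auto
  define k where "k = nat \<lceil>r\<rceil> + 1"
  have h: "ennreal (real k) \<le> ennreal r" using assms[of k] unfolding r(2) .
  then have "real k \<le> r" using ennreal_le_iff[OF r(1)] by blast
  moreover have "r \<le> real (nat \<lceil>r\<rceil>)" by (rule real_nat_ceiling_ge)
  ultimately show False unfolding k_def by simp
qed

lemma orthant_tail_inf:
  "emeasure lebesgue {x::real^'n. \<forall>j. L < x $ j} = \<infinity>"
proof (rule ennreal_all_nat_le_top)
  fix k :: nat
  define l :: "real^'n" where "l = (\<chi> j. L)"
  define u :: "real^'n" where "u = (\<chi> j. L + real k + 1)"
  have sub: "box l u \<subseteq> {x::real^'n. \<forall>j. L < x $ j}" by (auto simp: mem_box_cart l_def u_def)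
  have opn: "open {x::real^'n. \<forall>j. L < x $ j}"
  proof -
    have "{x::real^'n. \<forall>j. L < x $ j} = (\<Inter>j. {x. L < x $ j})" by auto
    moreover have "open (\<Inter>j. {x::real^'n. L < x $ j})"
      by (intro open_INT) (auto intro!: open_Collect_less continuous_intros)
    ultimately show ?thesis by simp
  qed
  have "emeasure lebesgue (box l u) = ennreal ((real k + 1) ^ CARD('n))"
    by (subst emeasure_box_cart) (auto simp: l_def u_def)
  moreover have "real k \<le> (real k + 1) ^ CARD('n)"
  proof -
    have "real k + 1 \<le> (real k + 1) ^ CARD('n)"
      by (rule self_le_power) auto
    then show ?thesis by simp
  qed
  ultimately have "ennreal (real k) \<le> emeasure lebesgue (box l u)" by simp
  also have "\<dots> \<le> emeasure lebesgue {x::real^'n. \<forall>j. L < x $ j}"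
    using sub opn by (intro emeasure_mono) (auto simp: borel_open)
  finally show "ennreal (real k) \<le> emeasure lebesgue {x::real^'n. \<forall>j. L < x $ j}" .
qed

lemma contra:
  fixes G :: "(real^'n) set" and u :: "real^'n \<Rightarrow> real" and g :: "real^'n \<Rightarrow> real^'n"
  assumes Gs: "G \<in> sets lebesgue" and orth: "open_orthant \<subseteq> G" and q: "q \<ge> 1"
    and L: "L \<ge> 0" and uz: "\<And>x. (\<forall>j. L < x $ j) \<Longrightarrow> u x = 0"
    and hyp: "(INF \<beta>::real. Lnorm G q (\<lambda>x. u x - \<beta>)) \<le> ennreal C * Lnorm G p (\<lambda>x. norm (g x))"
    and X: "ennreal X \<le> Lnorm G q u" and Y: "Lnorm G p (\<lambda>x. norm (g x)) \<le> ennreal Y"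
    and XY: "X > max C 0 * Y" and Y0: "Y \<ge> 0"
  shows False
proof -
  let ?T = "{x::real^'n. \<forall>j. L < x $ j}"
  have Tsub: "?T \<subseteq> G"
  proof
    fix x assume "x \<in> ?T"
    then have "x \<in> open_orthant" using L unfolding open_orthant_def by (auto intro: le_less_trans)
    then show "x \<in> G" using orth by blast
  qed
  have Tm: "?T \<in> sets lebesgue"
  proof -
    have "?T = (\<Inter>j. {x. L < x $ j})" by auto
    moreover have "open (\<Inter>j. {x::real^'n. L < x $ j})"
      by (intro open_INT) (auto intro!: open_Collect_less continuous_intros)
    ultimately show ?thesis by (simp add: borel_open)
  qed
  have "ennreal X \<le> (INF \<beta>::real. Lnorm G q (\<lambda>x. u x - \<beta>))"
  proof (rule INF_greatest)
    fix \<beta> :: real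
    show "ennreal X \<le> Lnorm G q (\<lambda>x. u x - \<beta>)"
    proof (cases "\<beta> = 0")
      case True then show ?thesis using X by simp
    next
      case False
      have "ennreal (\<bar>\<beta>\<bar> powr q) * emeasure lebesgue ?T \<le>
            (\<integral>\<^sup>+x. ennreal (\<bar>u x - \<beta>\<bar> powr q) \<partial>lebesgue_on G)"
        by (rule nn_lower[OF Gs Tsub Tm]) (auto simp: uz)
      moreover have "ennreal (\<bar>\<beta>\<bar> powr q) * emeasure lebesgue ?T = \<infinity>"
        using False by (simp add: orthant_tail_inf ennreal_mult_top)
      ultimately have "(\<integral>\<^sup>+x. ennreal (\<bar>u x - \<beta>\<bar> powr q) \<partial>lebesgue_on G) = \<infinity>"
        by (simp add: top_unique)
      then show ?thesis by (simp add: Lnorm_top)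
    qed
  qed
  also note hyp
  also have "ennreal C * Lnorm G p (\<lambda>x. norm (g x)) \<le> ennreal C * ennreal Y"
    using Y by (rule mult_left_mono) simp
  finally have XC: "ennreal X \<le> ennreal C * ennreal Y" .
  show False
  proof (cases "C \<ge> 0")
    case True
    then have "ennreal X \<le> ennreal (C * Y)" using XC Y0 by (simp add: ennreal_mult)
    then have "X \<le> C * Y" using True Y0 by simp
    then show False using XY True by simp
  next
    case False
    then have "ennreal X \<le> 0" using XC by (simp add: ennreal_neg)
    then have "X \<le> 0" using ennreal_le_iff[of 0 X] by (cases "X \<le> 0") auto
    then show False using XY False Y0 by simp
  qed
qed



lemma sstep_zero: "s \<le> 0 \<Longrightarrow> sstep s = 0 \<and> sstep' s = 0" by (simp add: sstep_def sstep'_def)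
lemma sstep_one: "s \<ge> 1 \<Longrightarrow> sstep s = 1 \<and> sstep' s = 0" by (simp add: sstep_def sstep'_def)
lemma sstep_cont: "continuous_on UNIV sstep"
  using sstep_deriv by (meson DERIV_isCont continuous_at_imp_continuous_on)

definition eta :: "real \<Rightarrow> real" where "eta s = sstep (s - 1) * sstep (4 - s)"
definition eta' :: "real \<Rightarrow> real" where
  "eta' s = sstep' (s - 1) * sstep (4 - s) - sstep (s - 1) * sstep' (4 - s)"

lemma eta_deriv: "(eta has_real_derivative eta' s) (at s)"
proof -
  have a: "((\<lambda>s. sstep (s - 1)) has_real_derivative sstep' (s - 1) * 1) (at s)"
    by (rule DERIV_chain2[OF sstep_deriv]) (auto intro!: derivative_eq_intros)
  have b: "((\<lambda>s. sstep (4 - s)) has_real_derivative sstep' (4 - s) * (- 1)) (at s)"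
    by (rule DERIV_chain2[OF sstep_deriv]) (auto intro!: derivative_eq_intros)
  have "((\<lambda>s. sstep (s - 1) * sstep (4 - s)) has_real_derivative
      sstep (s - 1) * (sstep' (4 - s) * (- 1)) + sstep' (s - 1) * 1 * sstep (4 - s)) (at s)"
    using DERIV_mult'[OF a b] by simp
  then show ?thesis unfolding eta_def[abs_def] eta'_def by (simp add: algebra_simps)
qed

lemma eta_range: "0 \<le> eta s" "eta s \<le> 1"
  using sstep_range[of "s - 1"] sstep_range[of "4 - s"]
  by (auto simp: eta_def intro: mult_nonneg_nonneg mult_le_one)

lemma eta'_bound: "\<bar>eta' s\<bar> \<le> 4"
proof -
  have "\<bar>sstep' (s - 1) * sstep (4 - s)\<bar> \<le> 2"
    using sstep'_bound[of "s - 1"] sstep_range[of "4 - s"]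
    by (simp add: abs_mult) (metis abs_ge_zero mult_right_le_one_le order_trans abs_of_nonneg)
  moreover have "\<bar>sstep (s - 1) * sstep' (4 - s)\<bar> \<le> 2"
    using sstep'_bound[of "4 - s"] sstep_range[of "s - 1"]
    by (simp add: abs_mult) (metis abs_ge_zero mult_left_le_one_le order_trans abs_of_nonneg)
  ultimately show ?thesis unfolding eta'_def by linarith
qed

lemma eta_one: "2 \<le> s \<Longrightarrow> s \<le> 3 \<Longrightarrow> eta s = 1"
  using sstep_one[of "s - 1"] sstep_one[of "4 - s"] by (simp add: eta_def)

lemma eta_zero: "s \<le> 1 \<or> 4 \<le> s \<Longrightarrow> eta s = 0 \<and> eta' s = 0"
  using sstep_zero[of "s - 1"] sstep_zero[of "4 - s"] by (auto simp: eta_def eta'_def)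

lemma eta'_cont: "continuous_on UNIV eta'"
  unfolding eta'_def[abs_def]
  by (intro continuous_intros continuous_on_compose2[OF sstep'_cont] continuous_on_compose2[OF sstep_cont]) auto

lemma eta_cont: "continuous_on UNIV eta"
  using eta_deriv by (meson DERIV_isCont continuous_at_imp_continuous_on)

definition bump :: "real \<Rightarrow> real^'n \<Rightarrow> real" where
  "bump R x = (\<Prod>j\<in>UNIV. eta (x $ j / R))"
definition bumpg :: "real \<Rightarrow> real^'n \<Rightarrow> real^'n" where
  "bumpg R x = (\<chi> i. eta' (x $ i / R) / R * (\<Prod>j\<in>UNIV - {i}. eta (x $ j / R)))"

lemma bump_deriv:
  fixes x :: "real^'n"
  shows "(bump R has_derivative (\<lambda>v. bumpg R x \<bullet> v)) (at x)"
proof -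
  have each: "((\<lambda>x. eta (x $ i / R)) has_derivative (\<lambda>v. eta' (x $ i / R) * (v $ i / R))) (at x)" for i
  proof -
    have l: "((\<lambda>x::real^'n. x $ i / R) has_derivative (\<lambda>v. v $ i / R)) (at x)"
      by (intro bounded_linear_imp_has_derivative bounded_linear_compose[OF bounded_linear_divide bounded_linear_vec_nth])
    have "(eta has_derivative (*) (eta' (x $ i / R))) (at (x $ i / R))"
      using eta_deriv by (simp add: has_field_derivative_def)
    from has_derivative_compose[OF l this] show ?thesis by simp
  qed
  have "(bump R has_derivative (\<lambda>v. \<Sum>i\<in>UNIV. eta' (x $ i / R) * (v $ i / R) * (\<Prod>j\<in>UNIV - {i}. eta (x $ j / R)))) (at x)"
    unfolding bump_def[abs_def] by (rule has_derivative_prod) (rule each)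
  moreover have "(\<lambda>v. \<Sum>i\<in>UNIV. eta' (x $ i / R) * (v $ i / R) * (\<Prod>j\<in>UNIV - {i}. eta (x $ j / R))) = (\<lambda>v. bumpg R x \<bullet> v)"
    by (auto simp: bumpg_def inner_vec_def fun_eq_iff intro!: sum.cong)
  ultimately show ?thesis by simp
qed



lemma arith_orth:
  fixes N p q C' K R e :: real and n :: nat
  assumes N: "N = real n" "n \<ge> 1" and p: "p \<ge> 1" and q: "q \<ge> 1"
    and e: "e = N / q - N / p + 1" "e > 0"
    and K: "K = 4 * N * 3 powr (N / p)" and C: "C' \<ge> 0"
    and R: "R = ((C' + 1) * K) powr (1 / e)"
  shows "(R ^ n) powr (1 / q) > C' * (((4 * N / R) powr p * (3 * R) ^ n) powr (1 / p))"
proof -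
  have Npos: "N > 0" using N by simp
  have Kpos: "K > 0" using K Npos by simp
  have Rpos: "R > 0" using R Kpos C by simp
  have Re: "R powr e = (C' + 1) * K"
    using R Kpos C e(2) by (simp add: powr_powr)
  have Y: "((4 * N / R) powr p * (3 * R) ^ n) powr (1 / p) = K * R powr (N / p - 1)"
  proof -
    have "((4 * N / R) powr p * (3 * R) ^ n) powr (1 / p)
        = ((4 * N / R) powr p) powr (1 / p) * ((3 * R) ^ n) powr (1 / p)"
      using Rpos Npos by (auto intro!: powr_mult)
    also have "((4 * N / R) powr p) powr (1 / p) = 4 * N / R"
      using p Rpos Npos by (simp add: powr_powr)
    also have "((3 * R) ^ n) powr (1 / p) = (3 * R) powr (N / p)"
    proof -
      have "(3 * R) ^ n = (3 * R) powr N" using Rpos N by (simp add: powr_realpow)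
      then show ?thesis using Rpos by (simp add: powr_powr)
    qed
    also have "(3 * R) powr (N / p) = 3 powr (N / p) * R powr (N / p)"
      using Rpos by (simp add: powr_mult)
    also have "R powr (N / p) = R powr (N / p - 1) * R"
      using Rpos by (simp add: powr_diff)
    finally show ?thesis using Rpos by (simp add: K)
  qed
  have X: "(R ^ n) powr (1 / q) = R powr e * R powr (N / p - 1)"
  proof -
    have "R ^ n = R powr N" using Rpos N by (simp add: powr_realpow)
    then have "(R ^ n) powr (1 / q) = R powr (N / q)"
      using Rpos by (simp add: powr_powr)
    also have "N / q = e + (N / p - 1)" using e by simp
    finally show ?thesis using Rpos by (simp add: powr_add)
  qed
  have Ypos: "K * R powr (N / p - 1) > 0" using Kpos Rpos by simp
  show ?thesis unfolding X Y Re using Ypos C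
    by (simp add: algebra_simps)
qed

lemma bumpg_bound:
  fixes x :: "real^'n"
  assumes R: "R > 0"
  shows "norm (bumpg R x) \<le> 4 * real CARD('n) / R"
proof -
  have c: "\<bar>bumpg R x $ i\<bar> \<le> 4 / R" for i
  proof -
    have "0 \<le> (\<Prod>j\<in>UNIV - {i}. eta (x $ j / R))" by (intro prod_nonneg) (simp add: eta_range)
    moreover have "(\<Prod>j\<in>UNIV - {i}. eta (x $ j / R)) \<le> 1" by (intro prod_le_1) (simp add: eta_range)
    ultimately have "\<bar>eta' (x $ i / R)\<bar> * (\<Prod>j\<in>UNIV - {i}. eta (x $ j / R)) \<le> 4 * 1"
      using eta'_bound[of "x $ i / R"] by (intro mult_mono) auto
    then have "\<bar>eta' (x $ i / R)\<bar> * (\<Prod>j\<in>UNIV - {i}. eta (x $ j / R)) / R \<le> 4 / R"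
      using R by (simp add: divide_right_mono)
    then have "\<bar>eta' (x $ i / R) / R * (\<Prod>j\<in>UNIV - {i}. eta (x $ j / R))\<bar> \<le> 4 / R"
      using R \<open>0 \<le> (\<Prod>j\<in>UNIV - {i}. eta (x $ j / R))\<close> by (simp add: abs_mult)
    then show ?thesis by (simp add: bumpg_def)
  qed
  have "norm (bumpg R x) \<le> (\<Sum>i\<in>UNIV. \<bar>bumpg R x $ i\<bar>)" by (rule norm_le_l1_cart)
  also have "\<dots> \<le> (\<Sum>i\<in>(UNIV::'n set). 4 / R)" by (intro sum_mono c)
  also have "\<dots> = 4 * real CARD('n) / R" by simp
  finally show ?thesis .
qed

lemma bumpg_zero:
  fixes x :: "real^'n"
  assumes R: "R > 0" and x: "x \<notin> cbox (\<chi> j. R) (\<chi> j. 4 * R)"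
  shows "bumpg R x = 0"
proof -
  obtain j where j: "x $ j < R \<or> x $ j > 4 * R" using x by (auto simp: mem_box_cart not_le)
  then have z: "eta (x $ j / R) = 0 \<and> eta' (x $ j / R) = 0"
    using R by (intro eta_zero) (auto simp: field_simps)
  show ?thesis
  proof (rule vec_eq_iff[THEN iffD2], rule allI)
    fix i
    show "bumpg R x $ i = 0 $ i"
    proof (cases "i = j")
      case True then show ?thesis using z by (simp add: bumpg_def)
    next
      case False
      then have "(\<Prod>k\<in>UNIV - {i}. eta (x $ k / R)) = 0" using z by (intro prod_zero) auto
      then show ?thesis by (simp add: bumpg_def)
    qed
  qed
qed

lemma bump_one:
  fixes x :: "real^'n"
  assumes R: "R > 0" and x: "x \<in> box (\<chi> j. 2 * R) (\<chi> j. 3 * R)"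
  shows "bump R x = 1"
proof -
  have "eta (x $ j / R) = 1" for j
    using x R by (intro eta_one) (auto simp: mem_box_cart field_simps less_imp_le)
  then show ?thesis by (simp add: bump_def)
qed

lemma bump_tail:
  fixes x :: "real^'n"
  assumes R: "R > 0" and x: "\<forall>j. 4 * R < x $ j"
  shows "bump R x = 0"
proof -
  obtain j :: 'n where True by blast
  have "eta (x $ j / R) = 0" using x R by (intro eta_zero[THEN conjunct1]) (auto simp: field_simps less_imp_le)
  then show ?thesis unfolding bump_def by (intro prod_zero) auto
qed

lemma cont_nth_div[continuous_intros]: "continuous_on S (\<lambda>x::real^'n. x $ i / R)"
  by (simp add: divide_inverse continuous_intros)

lemma bumpg_cont: "continuous_on UNIV (bumpg R :: real^'n \<Rightarrow> real^'n)"
  unfolding bumpg_def[abs_def] divide_inverse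
  by (intro continuous_on_vec_lambda continuous_intros continuous_on_compose2[OF eta'_cont]
        continuous_on_compose2[OF eta_cont]) auto

lemma orthant_case:
  fixes G :: "(real^'n) set"
  assumes G: "open G" "open_orthant \<subseteq> G" and p: "1 \<le> p" and q: "1 \<le> q"
    and e: "real CARD('n) / q - real CARD('n) / p + 1 > 0"
    and hyp: "\<forall>u g. in_L1p G p u g \<longrightarrow>
               (INF \<beta>::real. Lnorm G q (\<lambda>x. u x - \<beta>)) \<le> ennreal C * Lnorm G p (\<lambda>x. norm (g x))"
  shows False
proof -
  define N where "N = real CARD('n)"
  define e where "e = N / q - N / p + 1"
  define K where "K = 4 * N * 3 powr (N / p)"
  define C' where "C' = max C 0"
  define R where "R = ((C' + 1) * K) powr (1 / e)"
  have Npos: "N > 0" by (simp add: N_def)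
  have Kpos: "K > 0" using Npos by (simp add: K_def)
  have Rpos: "R > 0" using Kpos by (simp add: R_def C'_def)
  have Gs: "G \<in> sets lebesgue" using G(1) by (simp add: borel_open)
  define X where "X = (R ^ CARD('n)) powr (1 / q)"
  define Y where "Y = ((4 * N / R) powr p * (3 * R) ^ CARD('n)) powr (1 / p)"
  have XY: "X > C' * Y" unfolding X_def Y_def
    by (rule arith_orth[OF _ _ p q _ _ K_def _ R_def]) (use e in \<open>auto simp: N_def e_def C'_def\<close>)
  define lo :: "real^'n" where "lo = (\<chi> j. 2 * R)"
  define hi :: "real^'n" where "hi = (\<chi> j. 3 * R)"
  have boxG: "box lo hi \<subseteq> G"
    using G(2) Rpos by (auto simp: lo_def hi_def mem_box_cart open_orthant_def intro!: subsetD[OF G(2)]) 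
       (smt (verit))
  have Xb: "ennreal X \<le> Lnorm G q (bump R)"
  proof -
    have "ennreal 1 * emeasure lebesgue (box lo hi) \<le> (\<integral>\<^sup>+x. ennreal (\<bar>bump R x\<bar> powr q) \<partial>lebesgue_on G)"
      by (rule nn_lower[OF Gs boxG]) (auto simp: bump_one[OF Rpos] lo_def hi_def)
    moreover have "emeasure lebesgue (box lo hi) = ennreal (R ^ CARD('n))"
      using Rpos by (subst emeasure_box_cart) (auto simp: lo_def hi_def)
    ultimately show ?thesis unfolding X_def using q Rpos by (intro Lnorm_ge) auto
  qed
  define lo' :: "real^'n" where "lo' = (\<chi> j. R)"
  define hi' :: "real^'n" where "hi' = (\<chi> j. 4 * R)"
  have Yb: "Lnorm G p (\<lambda>x. norm (bumpg R x)) \<le> ennreal Y"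
  proof -
    have "(\<integral>\<^sup>+x. ennreal (\<bar>norm (bumpg R x)\<bar> powr p) \<partial>lebesgue_on G)
          \<le> ennreal ((4 * N / R) powr p) * emeasure lebesgue (cbox lo' hi')"
    proof (rule nn_upper[OF Gs])
      fix x assume "x \<in> G"
      show "\<bar>norm (bumpg R x)\<bar> powr p \<le> (4 * N / R) powr p * indicator (cbox lo' hi') x"
      proof (cases "x \<in> cbox lo' hi'")
        case True
        have "norm (bumpg R x) powr p \<le> (4 * N / R) powr p"
          using bumpg_bound[OF Rpos, of x] p by (intro powr_mono2) (auto simp: N_def)
        then show ?thesis using True by simp
      next
        case False
        then show ?thesis using bumpg_zero[OF Rpos, of x] by (simp add: lo'_def hi'_def)
      qed
    qed auto
    also have "emeasure lebesgue (cbox lo' hi') = ennreal ((3 * R) ^ CARD('n))"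
      using Rpos by (subst emeasure_box_cart) (auto simp: lo'_def hi'_def)
    finally have "(\<integral>\<^sup>+x. ennreal (\<bar>norm (bumpg R x)\<bar> powr p) \<partial>lebesgue_on G)
          \<le> ennreal ((4 * N / R) powr p * (3 * R) ^ CARD('n))"
      using Rpos by (simp add: ennreal_mult)
    then show ?thesis unfolding Y_def using p Rpos by (intro Lnorm_le) auto
  qed
  have wg: "weak_gradient G (bump R) (bumpg R) \<and> loc_integrable G (bump R)"
    by (rule weak_grad_C1[where V=UNIV and B="4 * real CARD('n) / R"])
       (use G bump_deriv bumpg_bound[OF Rpos] borel_measurable_continuous_onI[OF bumpg_cont] in auto)
  have "in_L1p G p (bump R) (bumpg R)"
    unfolding in_L1p_def using wg Yb by (auto simp: le_less_trans[OF _ ennreal_less_top])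
  with hyp have H: "(INF \<beta>::real. Lnorm G q (\<lambda>x. bump R x - \<beta>)) \<le> ennreal C * Lnorm G p (\<lambda>x. norm (bumpg R x))"
    by blast
  have Y0: "Y \<ge> 0" unfolding Y_def by simp
  show False
    by (rule contra[OF Gs G(2) q _ _ H Xb Yb _ Y0, of "4 * R"])
       (use Rpos XY bump_tail[OF Rpos] in \<open>auto simp: C'_def\<close>)
qed



lemma infdist_geI:
  assumes "A \<noteq> {}" "\<And>a. a \<in> A \<Longrightarrow> d \<le> dist x a"
  shows "d \<le> infdist x A"
  using assms by (simp add: infdist_notempty cINF_greatest)

lemma arith_mush:
  fixes N p q C' r w s :: real and n :: nat
  assumes N: "N = real n" "n \<ge> 2" and p: "p \<ge> 1" and q: "q \<ge> 1"
    and pq: "N / q \<le> N / p - 1" and r: "0 < r" "2 * r \<le> 1" and w: "0 < w"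
    and s: "s = w / r" and small: "s powr ((N - 1) / p) < 1 / (6 * (C' + 1))" and C: "C' \<ge> 0"
  shows "((2 * r) ^ n) powr (1 / q) > C' * (((3 / r) powr p * (r * (2 * w) ^ (n - 1))) powr (1 / p))"
proof -
  define A where "A = r powr (N / p - 1)"
  define S where "S = s powr ((N - 1) / p)"
  have Apos: "A > 0" using r by (simp add: A_def)
  have spos: "s > 0" using s r w by simp
  have S0: "S \<ge> 0" by (simp add: S_def)
  have X: "((2 * r) ^ n) powr (1 / q) \<ge> 2 powr (N / p - 1) * A"
  proof -
    have "(2 * r) ^ n = (2 * r) powr N" using r N by (simp add: powr_realpow)
    then have "((2 * r) ^ n) powr (1 / q) = (2 * r) powr (N / q)" using r by (simp add: powr_powr)
    also have "\<dots> \<ge> (2 * r) powr (N / p - 1)" using pq r by (intro powr_mono') auto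
    also have "(2 * r) powr (N / p - 1) = 2 powr (N / p - 1) * A" using r by (simp add: powr_mult A_def)
    finally show ?thesis .
  qed
  have Y: "((3 / r) powr p * (r * (2 * w) ^ (n - 1))) powr (1 / p) = 3 * 2 powr ((N - 1) / p) * S * A"
  proof -
    have n1: "real (n - 1) = N - 1" using N by simp
    have "((3 / r) powr p * (r * (2 * w) ^ (n - 1))) powr (1 / p)
        = ((3 / r) powr p) powr (1 / p) * (r powr (1 / p) * ((2 * w) ^ (n - 1)) powr (1 / p))"
      using r w by (simp add: powr_mult)
    also have "((3 / r) powr p) powr (1 / p) = 3 / r" using r p by (simp add: powr_powr)
    also have "((2 * w) ^ (n - 1)) powr (1 / p) = (2 * w) powr ((N - 1) / p)"
    proof -
      have "(2 * w) ^ (n - 1) = (2 * w) powr (N - 1)" using w n1 powr_realpow[of "2 * w" "n - 1"] by simp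
      then show ?thesis using w by (simp add: powr_powr)
    qed
    also have "2 * w = 2 * s * r" using s r by simp
    also have "(2 * s * r) powr ((N - 1) / p) = 2 powr ((N - 1) / p) * S * r powr ((N - 1) / p)"
      using spos r by (simp add: powr_mult S_def)
    also have "3 / r * (r powr (1 / p) * (2 powr ((N - 1) / p) * S * r powr ((N - 1) / p)))
             = 3 * 2 powr ((N - 1) / p) * S * (r powr (1 / p) * r powr ((N - 1) / p) / r)"
      by (simp add: field_simps)
    also have "r powr (1 / p) * r powr ((N - 1) / p) / r = A"
    proof -
      have "r powr (1 / p) * r powr ((N - 1) / p) = r powr (N / p)"
        using r by (simp add: powr_add[symmetric] add_divide_distrib[symmetric])
      then show ?thesis using r by (simp add: A_def powr_diff)
    qed
    finally have Z: "((3 / r) powr p * (r * (2 * s * r) ^ (n - 1))) powr (1 / p) = 3 * 2 powr ((N - 1) / p) * S * A" .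
    have w2: "2 * w = 2 * s * r" using s r by simp
    show ?thesis unfolding w2 by (rule Z)
  qed
  have two: "2 powr ((N - 1) / p) \<le> 2 * 2 powr (N / p - 1)"
  proof -
    have "(N - 1) / p = (N / p - 1) + (1 - 1 / p)" using p by (simp add: field_simps)
    then have "2 powr ((N - 1) / p) = 2 powr ((N / p - 1) + (1 - 1 / p))" by (simp only:)
    also have "\<dots> = 2 powr (N / p - 1) * 2 powr (1 - 1 / p)" by (rule powr_add)
    finally have "2 powr ((N - 1) / p) = 2 powr (N / p - 1) * 2 powr (1 - 1 / p)" .
    moreover have "2 powr (1 - 1 / p) \<le> 2 powr 1" using p by (intro powr_mono) auto
    ultimately show ?thesis by simp
  qed
  have "C' * (3 * 2 powr ((N - 1) / p) * S * A) \<le> C' * (3 * (2 * 2 powr (N / p - 1)) * S * A)"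
    using two C S0 Apos by (intro mult_left_mono mult_right_mono) auto
  also have "\<dots> = (6 * C' * S) * (2 powr (N / p - 1) * A)" by simp
  also have "\<dots> < 1 * (2 powr (N / p - 1) * A)"
  proof (rule mult_strict_right_mono)
    have "6 * C' * S \<le> 6 * (C' + 1) * S" using S0 by (intro mult_right_mono) auto
    also have "\<dots> < 1" using small C unfolding S_def by (simp add: field_simps)
    finally show "6 * C' * S < 1" .
  qed (use Apos in simp)
  finally show ?thesis using X Y by simp
qed

lemma cap_cbox: "cap a r d = cbox (\<chi> j. if j = a then - 3 * r else d $ j) (\<chi> j. if j = a then - r else d $ j + 2 * r)"
  by (auto simp: cap_def mem_box_cart split: if_splits)

lemma stem_cbox: "stem a r w c = cbox (\<chi> j. if j = a then - r else c $ j) (\<chi> j. if j = a then 0 else c $ j + 2 * w)"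
  by (auto simp: stem_def mem_box_cart split: if_splits)

lemma mushroom_compact: "compact (mushroom a r w c d)"
  unfolding mushroom_def cap_cbox stem_cbox by (intro compact_Un compact_cbox)

lemma mushroom_lower: "r \<ge> 0 \<Longrightarrow> x \<in> mushroom a r w c d \<Longrightarrow> - 3 * r \<le> x $ a"
  by (auto simp: mushroom_def cap_def stem_def)

lemma mushroom_other:
  assumes "placement_ok b r w cs ds" "a \<noteq> b" "w \<ge> 0" "r > 0" "x \<in> mushroom b r w cs ds"
  shows "- 2 * r < x $ a"
  using assms by (auto simp: mushroom_def cap_def stem_def placement_ok_def) (smt (verit))+

lemma mushroom_stem:
  assumes "x \<in> mushroom a r w c d" "- r < x $ a"
  shows "x \<in> stem a r w c"
  using assms by (auto simp: mushroom_def cap_def)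



lemma mushroom_case:
  fixes \<phi> :: "real \<Rightarrow> real" and p q C :: real
    and a b :: "'n::finite" and r :: "nat \<Rightarrow> real"
    and c d cs ds :: "nat \<Rightarrow> real^'n"
    and G :: "(real^'n) set"
  assumes dim: "CARD('n) \<ge> 2" and ab: "a \<noteq> b"
    and p: "1 \<le> p" and q: "1 \<le> q"
    and pq: "real CARD('n) / q \<le> real CARD('n) / p - 1"
    and phi: "admissible_phi \<phi>"
    and phi_lim: "filterlim (\<lambda>t. t / \<phi> t) at_top (at_right 0)"
    and r_pos: "\<And>m. 0 < r m" and r_lim: "r \<longlonglongrightarrow> 0"
    and r_phi: "\<And>m. \<phi> (r m) \<le> r m"
    and place: "\<And>m. placement_ok a (r m) (\<phi> (r m)) (c m) (d m)"
    and place_s: "\<And>m. placement_ok b (r m) (\<phi> (r m)) (cs m) (ds m)"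
    and disj: "\<And>m k. m \<noteq> k \<Longrightarrow>
        mushroom a (r m) (\<phi> (r m)) (c m) (d m) \<inter> mushroom a (r k) (\<phi> (r k)) (c k) (d k) = {}"
    and disj_as: "\<And>m k.
        mushroom a (r m) (\<phi> (r m)) (c m) (d m) \<inter> mushroom b (r k) (\<phi> (r k)) (cs k) (ds k) = {}"
    and G: "G = interior (open_orthant \<union>
        (\<Union>m. mushroom a (r m) (\<phi> (r m)) (c m) (d m) \<union> mushroom b (r m) (\<phi> (r m)) (cs m) (ds m)))"
    and hyp: "\<forall>u g. in_L1p G p u g \<longrightarrow>
               (INF \<beta>::real. Lnorm G q (\<lambda>x. u x - \<beta>)) \<le> ennreal C * Lnorm G p (\<lambda>x. norm (g x))"
  shows False
proof -
  define MA where "MA k = mushroom a (r k) (\<phi> (r k)) (c k) (d k)" for k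
  define MB where "MB k = mushroom b (r k) (\<phi> (r k)) (cs k) (ds k)" for k
  have phipos: "\<phi> t > 0" if "t > 0" for t
  proof -
    have "strict_mono_on {0..} \<phi>" "\<phi> 0 = 0" using phi unfolding admissible_phi_def by auto
    then show ?thesis using that strict_mono_onD[of "{0..}" \<phi> 0 t] by auto
  qed
  define N where "N = real CARD('n)"
  have N2: "N \<ge> 2" using dim by (simp add: N_def)
  define C' where "C' = max C 0"
  define \<sigma> where "\<sigma> = (1 / (6 * (C' + 1))) powr (p / (N - 1))"
  have C'0: "C' \<ge> 0" by (simp add: C'_def)
  have \<sigma>pos: "\<sigma> > 0" using C'0 by (simp add: \<sigma>_def)
  have rat: "filterlim r (at_right 0) sequentially"
    using r_lim r_pos by (intro tendsto_imp_filterlim_at_right) auto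
  have "filterlim (\<lambda>k. r k / \<phi> (r k)) at_top sequentially"
    using filterlim_compose[OF phi_lim rat] by (simp add: o_def)
  then have ev1: "eventually (\<lambda>k. 1 / \<sigma> < r k / \<phi> (r k)) sequentially"
    by (simp add: filterlim_at_top_dense)
  have ev2: "eventually (\<lambda>k. r k < 1 / 2) sequentially"
    using r_lim by (rule order_tendstoD) simp
  obtain m where m1: "1 / \<sigma> < r m / \<phi> (r m)" and m2: "r m < 1 / 2"
    using eventually_conj[OF ev1 ev2] by (auto simp: eventually_sequentially)
  define r0 where "r0 = r m"
  define w0 where "w0 = \<phi> r0"
  have r0: "0 < r0" "2 * r0 \<le> 1" using r_pos m2 by (auto simp: r0_def)
  have w0: "0 < w0" "w0 \<le> r0" using phipos r0 r_phi by (auto simp: w0_def r0_def)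
  have sless: "w0 / r0 < \<sigma>"
  proof -
    have "1 / \<sigma> < r0 / w0" using m1 by (simp add: r0_def w0_def)
    then have "1 < \<sigma> * (r0 / w0)" using \<sigma>pos by (simp add: field_simps)
    then show ?thesis using w0 r0 by (simp add: field_simps)
  qed
  have small: "(w0 / r0) powr ((N - 1) / p) < 1 / (6 * (C' + 1))"
  proof -
    have "(w0 / r0) powr ((N - 1) / p) < \<sigma> powr ((N - 1) / p)"
      using sless w0 r0 N2 p by (intro powr_less_mono2) auto
    also have "\<sigma> powr ((N - 1) / p) = 1 / (6 * (C' + 1))"
      unfolding \<sigma>_def using N2 p C'0 by (simp add: powr_powr)
    finally show ?thesis .
  qed
  obtain K0 where K0: "\<And>k. k \<ge> K0 \<Longrightarrow> r k < r0 / 24"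
    using order_tendstoD(2)[OF r_lim, of "r0 / 24"] r0 by (auto simp: eventually_sequentially)
  define S where "S = MA m \<inter> {x. x $ a \<le> - r0 / 8}"
  define T where "T = (\<Union>k\<in>{k. k < K0 \<and> k \<noteq> m}. MA k) \<union> (\<Union>k\<in>{..<K0}. MB k)"
  have Scomp: "compact S" unfolding S_def MA_def
    by (intro compact_Int_closed mushroom_compact) (auto intro!: closed_Collect_le continuous_intros)
  have Tcomp: "compact T" unfolding T_def MA_def MB_def
    by (intro compact_Un compact_UN mushroom_compact) auto
  have ST: "S \<inter> T = {}"
    unfolding S_def T_def MA_def MB_def using disj disj_as by blast
  obtain \<delta> where \<delta>: "\<delta> > 0" "\<And>x y. x \<in> S \<Longrightarrow> y \<in> T \<Longrightarrow> \<delta> \<le> dist x y"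
    using separate_compact_closed[OF Scomp compact_imp_closed[OF Tcomp] ST] by blast
  define xc :: "real^'n" where "xc = (\<chi> j. if j = a then - 2 * r0 else d m $ j)"
  have xcS: "xc \<in> S"
    using r0 by (auto simp: S_def MA_def mushroom_def cap_def xc_def r0_def)
  have Gsub: "G \<subseteq> open_orthant \<union> (\<Union>k. MA k \<union> MB k)"
    unfolding G MA_def MB_def by (rule interior_subset)
  have sep: "\<delta> \<le> infdist x S" if x: "x \<in> G" "x $ a \<le> - r0 / 8" "x \<notin> MA m" for x
  proof -
    have "x \<notin> open_orthant" using x(2) r0 by (auto simp: open_orthant_def intro: exI[of _ a])
    then obtain k where k: "x \<in> MA k \<or> x \<in> MB k" using Gsub x(1) by blast
    have "x \<in> T"
    proof (cases "x \<in> MA k")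
      case True
      have "- 3 * r k \<le> x $ a" using mushroom_lower[of "r k"] True r_pos[of k] by (simp add: MA_def)
      then have "k < K0" using K0[of k] x(2) by (cases "k < K0") (auto simp: not_less)
      moreover have "k \<noteq> m" using True x(3) by auto
      ultimately show ?thesis using True by (auto simp: T_def)
    next
      case False
      then have xb: "x \<in> MB k" using k by simp
      have "- 2 * r k < x $ a"
        using mushroom_other[OF place_s ab _ r_pos] xb phipos[OF r_pos[of k]] by (simp add: MB_def less_imp_le)
      then have "k < K0" using K0[of k] x(2) r_pos[of k] by (cases "k < K0") (auto simp: not_less)
      then show ?thesis using xb by (auto simp: T_def)
    qed
    then show ?thesis using xcS \<delta>(2) by (intro infdist_geI) (auto simp: dist_commute)
  qed
  define h where "h t = sstep ((- t - r0 / 4) / (3 * r0 / 4))" for t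
  define h' where "h' t = sstep' ((- t - r0 / 4) / (3 * r0 / 4)) * (- 4 / (3 * r0))" for t
  have hd: "(h has_real_derivative h' t) (at t)" for t
  proof -
    have "((\<lambda>t. (- t - r0 / 4) / (3 * r0 / 4)) has_real_derivative (- 4 / (3 * r0))) (at t)"
      using r0 by (auto intro!: derivative_eq_intros simp: field_simps)
    from DERIV_chain2[OF sstep_deriv this] show ?thesis by (simp add: h_def[abs_def] h'_def)
  qed
  have h0: "h t = 0 \<and> h' t = 0" if "t \<ge> - r0 / 4" for t
  proof -
    have "(- t - r0 / 4) / (3 * r0 / 4) \<le> 0" using that r0 by (simp add: divide_nonpos_pos)
    then show ?thesis using sstep_zero by (simp add: h_def h'_def)
  qed
  have h1: "h t = 1 \<and> h' t = 0" if "t \<le> - r0" for t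
  proof -
    have "(- t - r0 / 4) / (3 * r0 / 4) \<ge> 1" using that r0 by (simp add: field_simps)
    then show ?thesis using sstep_one by (simp add: h_def h'_def)
  qed
  have h'b: "\<bar>h' t\<bar> \<le> 3 / r0" for t
  proof -
    have "\<bar>h' t\<bar> = \<bar>sstep' ((- t - r0 / 4) / (3 * r0 / 4))\<bar> * (4 / (3 * r0))"
      using r0 by (simp add: h'_def abs_mult)
    also have "\<dots> \<le> 2 * (4 / (3 * r0))" using sstep'_bound r0 by (intro mult_right_mono) auto
    also have "\<dots> \<le> 3 / r0" using r0 by (simp add: field_simps)
    finally show ?thesis .
  qed
  have h'c: "continuous_on UNIV h'"
    unfolding h'_def[abs_def]
    by (intro continuous_intros continuous_on_compose2[OF sstep'_cont]) (use r0 in auto)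
  define W where "W = {x. infdist x S < \<delta> / 2}"
  define E where "E = {x. \<delta> / 2 < infdist x S}"
  define Hs where "Hs = {x::real^'n. - r0 / 4 < x $ a}"
  define u where "u x = (if x \<in> W then h (x $ a) else 0)" for x
  define g where "g x = (if x \<in> W then h' (x $ a) *\<^sub>R axis a (1::real) else 0)" for x :: "real^'n"
  have Wo: "open W" unfolding W_def by (intro open_Collect_less continuous_intros)
  have Eo: "open E" unfolding E_def by (intro open_Collect_less continuous_intros)
  have Ho: "open Hs" unfolding Hs_def by (intro open_Collect_less continuous_intros)
  have WE: "W \<inter> E = {}" by (auto simp: W_def E_def)
  have GV: "G \<subseteq> Hs \<union> W \<union> E"
  proof
    fix x assume xG: "x \<in> G"
    show "x \<in> Hs \<union> W \<union> E"
    proof (cases "- r0 / 4 < x $ a")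
      case True then show ?thesis by (simp add: Hs_def)
    next
      case False
      show ?thesis
      proof (cases "x \<in> MA m")
        case True
        then have "x \<in> S" using False r0 by (auto simp: S_def)
        then show ?thesis using \<delta> by (simp add: W_def)
      next
        case nm: False
        have "\<delta> \<le> infdist x S" using sep[OF xG _ nm] False r0 by simp
        then show ?thesis using \<delta> by (simp add: E_def)
      qed
    qed
  qed
  have ud: "(u has_derivative (\<lambda>v. g x \<bullet> v)) (at x)" if xV: "x \<in> Hs \<union> W \<union> E" for x
  proof -
    consider "x \<in> Hs" | "x \<in> W" | "x \<in> E" using xV by blast
    then show ?thesis
    proof cases
      case 1
      have gx: "g x = 0" using h0[of "x $ a"] 1 by (simp add: g_def Hs_def)
      have "(u has_derivative (\<lambda>v. 0)) (at x)"
        by (rule has_derivative_transform_within_open[of "\<lambda>y. 0" _ _ _ Hs])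
           (use 1 Ho h0 in \<open>auto simp: u_def Hs_def\<close>)
      then show ?thesis using gx by simp
    next
      case 2
      have "((\<lambda>y. h (y $ a)) has_derivative (\<lambda>v. h' (x $ a) * v $ a)) (at x)"
      proof -
        have l: "((\<lambda>y::real^'n. y $ a) has_derivative (\<lambda>v. v $ a)) (at x)"
          by (intro bounded_linear_imp_has_derivative bounded_linear_vec_nth)
        have "(h has_derivative (*) (h' (x $ a))) (at (x $ a))"
          using hd by (simp add: has_field_derivative_def)
        from has_derivative_compose[OF l this] show ?thesis by simp
      qed
      then have "(u has_derivative (\<lambda>v. h' (x $ a) * v $ a)) (at x)"
        by (rule has_derivative_transform_within_open[of _ _ _ _ W]) (use 2 Wo in \<open>auto simp: u_def\<close>)
      moreover have "(\<lambda>v. h' (x $ a) * v $ a) = (\<lambda>v. g x \<bullet> v)"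
        using 2 by (auto simp: g_def inner_axis' fun_eq_iff)
      ultimately show ?thesis by simp
    next
      case 3
      then have xW: "x \<notin> W" using WE by blast
      have "(u has_derivative (\<lambda>v. 0)) (at x)"
        by (rule has_derivative_transform_within_open[of "\<lambda>y. 0" _ _ _ E])
           (use 3 Eo WE in \<open>auto simp: u_def\<close>)
      then show ?thesis using xW by (simp add: g_def)
    qed
  qed
  have gb: "norm (g x) \<le> 3 / r0" for x
    using h'b[of "x $ a"] r0 by (auto simp: g_def)
  have gm: "g \<in> borel_measurable borel"
    unfolding g_def
    by (rule borel_measurable_continuous_on_if)
       (use Wo in \<open>auto simp: borel_open intro!: continuous_intros continuous_on_compose2[OF h'c]\<close>)
  have Go: "open G" unfolding G by simp
  have Gs: "G \<in> sets lebesgue" using Go by (simp add: borel_open)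
  have orthG: "open_orthant \<subseteq> G"
  proof -
    have "open (open_orthant :: (real^'n) set)"
    proof -
      have "(open_orthant :: (real^'n) set) = (\<Inter>j. {x. 0 < x $ j})" by (auto simp: open_orthant_def)
      moreover have "open (\<Inter>j. {x::real^'n. 0 < x $ j})"
        by (intro open_INT) (auto intro!: open_Collect_less continuous_intros)
      ultimately show ?thesis by simp
    qed
    then show ?thesis unfolding G by (intro interior_maximal) auto
  qed
  have wg: "weak_gradient G u g \<and> loc_integrable G u"
    by (rule weak_grad_C1[OF _ GV Go ud gb gm]) (use Ho Wo Eo in auto)
  define lo :: "real^'n" where "lo = (\<chi> j. if j = a then - 3 * r0 else d m $ j)"
  define hi :: "real^'n" where "hi = (\<chi> j. if j = a then - r0 else d m $ j + 2 * r0)"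
  have capMA: "cbox lo hi \<subseteq> MA m"
    unfolding MA_def mushroom_def lo_def hi_def r0_def by (simp add: cap_cbox)
  have boxG: "box lo hi \<subseteq> G"
  proof -
    have "box lo hi \<subseteq> open_orthant \<union> (\<Union>k. MA k \<union> MB k)"
      using capMA box_subset_cbox by blast
    then show ?thesis unfolding G MA_def MB_def by (intro interior_maximal) auto
  qed
  define X where "X = ((2 * r0) ^ CARD('n)) powr (1 / q)"
  have Xb: "ennreal X \<le> Lnorm G q u"
  proof -
    have one: "u x = 1" if "x \<in> box lo hi" for x
    proof -
      have xa: "x $ a < - r0" using that by (auto simp: mem_box_cart lo_def hi_def dest: spec[of _ a])
      have "x \<in> S" using capMA box_subset_cbox that xa r0 by (auto simp: S_def)
      then have "x \<in> W" using \<delta> by (simp add: W_def)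
      then show ?thesis using h1[of "x $ a"] xa by (simp add: u_def)
    qed
    have "ennreal 1 * emeasure lebesgue (box lo hi) \<le> (\<integral>\<^sup>+x. ennreal (\<bar>u x\<bar> powr q) \<partial>lebesgue_on G)"
      by (rule nn_lower[OF Gs boxG]) (auto simp: one)
    moreover have "emeasure lebesgue (box lo hi) = ennreal ((2 * r0) ^ CARD('n))"
    proof -
      have "emeasure lebesgue (box lo hi) = ennreal (\<Prod>i\<in>UNIV. hi $ i - lo $ i)"
        using r0 by (intro emeasure_box_cart) (auto simp: lo_def hi_def)
      also have "(\<Prod>i\<in>UNIV. hi $ i - lo $ i) = (\<Prod>i\<in>(UNIV::'n set). 2 * r0)"
        by (intro prod.cong) (auto simp: lo_def hi_def)
      finally show ?thesis by simp
    qed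
    ultimately show ?thesis unfolding X_def using q r0 by (intro Lnorm_ge) auto
  qed
  define slo :: "real^'n" where "slo = (\<chi> j. if j = a then - r0 else c m $ j)"
  define shi :: "real^'n" where "shi = (\<chi> j. if j = a then 0 else c m $ j + 2 * w0)"
  define Y where "Y = ((3 / r0) powr p * (r0 * (2 * w0) ^ (CARD('n) - 1))) powr (1 / p)"
  have gsupp: "x \<in> cbox slo shi" if "x \<in> G" "g x \<noteq> 0" for x
  proof -
    have xW: "x \<in> W" and hx: "h' (x $ a) \<noteq> 0" using that(2) by (auto simp: g_def split: if_splits)
    have xa1: "x $ a < - r0 / 4" using h0[of "x $ a"] hx by (auto simp: not_le[symmetric])
    have xa2: "- r0 < x $ a" using h1[of "x $ a"] hx by (auto simp: not_le[symmetric])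
    have "x \<in> MA m"
    proof (rule ccontr)
      assume "x \<notin> MA m"
      then have "\<delta> \<le> infdist x S" using sep[OF that(1)] xa1 r0 by simp
      then show False using xW \<delta> by (simp add: W_def)
    qed
    then have "x \<in> stem a r0 w0 (c m)" using mushroom_stem[of x] xa2 by (simp add: MA_def r0_def w0_def)
    then show ?thesis by (simp add: stem_cbox slo_def shi_def)
  qed
  have Yb: "Lnorm G p (\<lambda>x. norm (g x)) \<le> ennreal Y"
  proof -
    have "(\<integral>\<^sup>+x. ennreal (\<bar>norm (g x)\<bar> powr p) \<partial>lebesgue_on G)
          \<le> ennreal ((3 / r0) powr p) * emeasure lebesgue (cbox slo shi)"
    proof (rule nn_upper[OF Gs])
      fix x assume xG: "x \<in> G"
      show "\<bar>norm (g x)\<bar> powr p \<le> (3 / r0) powr p * indicator (cbox slo shi) x"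
      proof (cases "g x = 0")
        case True then show ?thesis by simp
      next
        case False
        have "norm (g x) powr p \<le> (3 / r0) powr p" using gb[of x] p by (intro powr_mono2) auto
        then show ?thesis using gsupp[OF xG False] by simp
      qed
    qed auto
    also have "emeasure lebesgue (cbox slo shi) = ennreal (r0 * (2 * w0) ^ (CARD('n) - 1))"
    proof -
      have "emeasure lebesgue (cbox slo shi) = ennreal (\<Prod>i\<in>UNIV. shi $ i - slo $ i)"
        using r0 w0 by (intro emeasure_box_cart) (auto simp: slo_def shi_def)
      also have "(\<Prod>i\<in>UNIV. shi $ i - slo $ i) = (\<Prod>i\<in>UNIV. if i = a then r0 else 2 * w0)"
        by (intro prod.cong) (auto simp: slo_def shi_def)
      also have "\<dots> = r0 * (2 * w0) ^ (CARD('n) - 1)"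
      proof -
        have "(\<Prod>i\<in>UNIV. if i = a then r0 else 2 * w0) = r0 * (\<Prod>i\<in>UNIV - {a}. if i = a then r0 else 2 * w0)"
          by (subst prod.remove[of UNIV a]) auto
        also have "(\<Prod>i\<in>UNIV - {a}. if i = a then r0 else 2 * w0) = (\<Prod>i\<in>UNIV - {a}. 2 * w0)"
          by (intro prod.cong) auto
        also have "\<dots> = (2 * w0) ^ (CARD('n) - 1)" by (simp add: card_Diff_singleton)
        finally show ?thesis .
      qed
      finally show ?thesis .
    qed
    finally have "(\<integral>\<^sup>+x. ennreal (\<bar>norm (g x)\<bar> powr p) \<partial>lebesgue_on G)
          \<le> ennreal ((3 / r0) powr p * (r0 * (2 * w0) ^ (CARD('n) - 1)))"
      using r0 w0 by (simp add: ennreal_mult)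
    then show ?thesis unfolding Y_def using p r0 w0 by (intro Lnorm_le) auto
  qed
  have "in_L1p G p u g"
    unfolding in_L1p_def using wg Yb by (auto simp: le_less_trans[OF _ ennreal_less_top])
  with hyp have Hy: "(INF \<beta>::real. Lnorm G q (\<lambda>x. u x - \<beta>)) \<le> ennreal C * Lnorm G p (\<lambda>x. norm (g x))"
    by blast
  have XY: "X > C' * Y" unfolding X_def Y_def
    by (rule arith_mush[OF _ _ p q _ r0 w0(1) refl small C'0]) (use dim pq in \<open>auto simp: N_def\<close>)
  have Y0: "Y \<ge> 0" unfolding Y_def by simp
  have uz: "u x = 0" if "\<forall>j. 0 < x $ j" for x
    using that h0[of "x $ a"] r0 by (auto simp: u_def dest: spec[of _ a])
  show False
    by (rule contra[OF Gs orthG q _ _ Hy Xb Yb _ Y0, of 0]) (use XY uz in \<open>auto simp: C'_def\<close>)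
qed


theorem theorem6p1:
  fixes \<phi> :: "real \<Rightarrow> real" and p :: real
    and a b :: "'n::finite" and r :: "nat \<Rightarrow> real"
    and c d cs ds :: "nat \<Rightarrow> real^'n"
    and G :: "(real^'n) set"
  assumes dim: "CARD('n) \<ge> 2" and ab: "a \<noteq> b"
    and p: "1 \<le> p" "p < real CARD('n)"
    and phi: "admissible_phi \<phi>"
    and phi_lim: "filterlim (\<lambda>t. t / \<phi> t) at_top (at_right 0)"
    and r_pos: "\<And>m. 0 < r m" and r_dec: "decseq r" and r_lim: "r \<longlonglongrightarrow> 0"
    and r_phi: "\<And>m. \<phi> (r m) \<le> r m"
    and place: "\<And>m. placement_ok a (r m) (\<phi> (r m)) (c m) (d m)"
    and place_s: "\<And>m. placement_ok b (r m) (\<phi> (r m)) (cs m) (ds m)"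
    and disj: "\<And>m k. m \<noteq> k \<Longrightarrow>
        mushroom a (r m) (\<phi> (r m)) (c m) (d m) \<inter> mushroom a (r k) (\<phi> (r k)) (c k) (d k) = {}"
    and disj_s: "\<And>m k. m \<noteq> k \<Longrightarrow>
        mushroom b (r m) (\<phi> (r m)) (cs m) (ds m) \<inter> mushroom b (r k) (\<phi> (r k)) (cs k) (ds k) = {}"
    and disj_as: "\<And>m k.
        mushroom a (r m) (\<phi> (r m)) (c m) (d m) \<inter> mushroom b (r k) (\<phi> (r k)) (cs k) (ds k) = {}"
    and dist: "\<And>m. 1 \<le> infdist 0 (mushroom a (r m) (\<phi> (r m)) (c m) (d m)) \<and>
                    infdist 0 (mushroom a (r m) (\<phi> (r m)) (c m) (d m)) \<le> 4"
    and dist_s: "\<And>m. 1 \<le> infdist 0 (mushroom b (r m) (\<phi> (r m)) (cs m) (ds m)) \<and>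
                    infdist 0 (mushroom b (r m) (\<phi> (r m)) (cs m) (ds m)) \<le> 4"
    and G: "G = interior (open_orthant \<union>
        (\<Union>m. mushroom a (r m) (\<phi> (r m)) (c m) (d m) \<union> mushroom b (r m) (\<phi> (r m)) (cs m) (ds m)))"
  shows "\<not> (\<exists>q C. 1 \<le> q \<and>
            (\<forall>u g. in_L1p G p u g \<longrightarrow>
               (INF \<beta>::real. Lnorm G q (\<lambda>x. u x - \<beta>)) \<le> ennreal C * Lnorm G p (\<lambda>x. norm (g x))))"
proof
  assume "\<exists>q C. 1 \<le> q \<and>
            (\<forall>u g. in_L1p G p u g \<longrightarrow>
               (INF \<beta>::real. Lnorm G q (\<lambda>x. u x - \<beta>)) \<le> ennreal C * Lnorm G p (\<lambda>x. norm (g x)))"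
  then obtain q C where q: "1 \<le> q" and hyp: "\<forall>u g. in_L1p G p u g \<longrightarrow>
               (INF \<beta>::real. Lnorm G q (\<lambda>x. u x - \<beta>)) \<le> ennreal C * Lnorm G p (\<lambda>x. norm (g x))"
    by blast
  have Go: "open G" unfolding G by simp
  have orthG: "open_orthant \<subseteq> G"
  proof -
    have "(open_orthant :: (real^'n) set) = (\<Inter>j. {x. 0 < x $ j})" by (auto simp: open_orthant_def)
    moreover have "open (\<Inter>j. {x::real^'n. 0 < x $ j})"
      by (intro open_INT) (auto intro!: open_Collect_less continuous_intros)
    ultimately have "open (open_orthant :: (real^'n) set)" by simp
    then show ?thesis unfolding G by (intro interior_maximal) auto
  qed
  show False
  proof (cases "real CARD('n) / q - real CARD('n) / p + 1 > 0")
    case True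
    show False by (rule orthant_case[OF Go orthG p(1) q True hyp])
  next
    case False
    then have pq: "real CARD('n) / q \<le> real CARD('n) / p - 1" by simp
    show False
      by (rule mushroom_case[OF dim ab p(1) q pq phi phi_lim r_pos r_lim r_phi place place_s disj disj_as G hyp])
  qed
qed

end
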